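(* Fix a positive integer $n$, a nonzero $n$-partition $\lambda$ with $\lambda_n=0$, an $n$-semistandard tableau $T$ of shape $\lambda$, and $1\le h\le d$. Then for every location $(j,i)\ge(\beta_h,1)$ (in reading order) for which $\pi^{(j,i)}$ is defined, we have $\Pi^{(j,i)}_{\zeta_h}=U(T;\beta_h,j,i)$.
   Context: Let $\lambda=(\lambda_1,\dots,\lambda_n)$ be weakly decreasing nonnegative integers with $\lambda_n=0$, $\lambda\ne0$, identified with its Young diagram. For $1\le j\le\lambda_1$ let $c_j$ be the length of column $j$; let $\zeta_1<\dots<\zeta_d$ be the distinct column lengths, $\zeta_0:=0$, $\zeta_{d+1}:=n$; for $1\le h\le d$ let $\beta_h$ be the index of the rightmost column of length $\zeta_h$. Write $(j,i)$ for the box in column $j$, row $i$. Reading order: $(l,k)\le(j,i)$ iff $l<j$, or $l=j$ and $k\ge i$; conventions: $(j,0)$ means $(j+1,c_{j+1})$ and $(j,c_j+1)$ means $(j-1,1)$. An $n$-semistandard tableau $T$ of shape $\lambda$ has entries in $[n]$, weakly increasing along rows, strictly increasing down columns; $T(j,i)$ is its entry and $C_j$ its $j$-th column. Scanning paths: the EWIS of a sequence $x_1,x_2,\dots$ is $x_{a_1},x_{a_2},\dots$ with $a_1=1$ and $a_b$ the smallest index $>a_{b-1}$ with $x_{a_b}\ge x_{a_{b-1}}$. For each column $l$ and $k=c_l,c_l-1,\dots,1$ in turn: delete the boxes of the previously computed $P(T;l,k')$, $k'>k$; form the sequence of entries in the lowest box of each of columns $l,\dots,\lambda_1$ of the current shape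 (skipping empty columns); $P(T;l,k)$ is the set of locations of the terms of its EWIS. For $1\le l<\lambda_1$, a location $(a,b)>(l,1)$ and $1\le k\le c_l$, the most recent value of $P(T;l,k)$ relative to $(a,b)$ is the entry of $T$ at the latest location of $P(T;l,k)$ strictly before $(a,b)$. For $1\le l<\lambda_1$ and $(l,1)\le(j,i)<(\lambda_1,1)$, $U(T;l,j,i)$ is the set of most recent values of the paths $P(T;l,k)$, $1\le k\le c_l$, relative to $(j,i-1)$; $U(T;l,\lambda_1,1)$ is the set of entries of $T$ at the final locations of the $P(T;l,k)$, $1\le k\le c_l$; and $U(T;\lambda_1,\lambda_1,1)$ is the set of entries of the rightmost column of $T$. Greedy procedure: $\pi^{(1,1)}$ has first $c_1$ entries those of $C_1$ increasing, followed by the rest of $[n]$ increasing. For $(j,i)$ with $j\ge2$ in reading order from $(2,c_2)$ to $(\lambda_1,1)$, define $\pi^{(j,i)}$ from $\pi:=\pi^{(j,i+1)}$: if $T(j-1,i)=T(j,i)$ set $\pi^{(j,i)}=\pi$; otherwise let $i_0=i$, and given $i_{x-1}$ with $\pi_{i_{x-1}}<T(j,i)$ let $i_x$ be the smallest index $>c_j$ with $\pi_{i_{x-1}}<\pi_{i_x}\le T(j,i)$, stopping at $i_m$ with $\pi_{i_m}=T(j,i)$; set $\pi^{(j,i)}_{i_x}=\pi_{i_{x-1}}$ ($1\le x\le m$), $\pi^{(j,i)}_{i_0}=\pi_{i_m}$, others unchanged. So $\pi^{(j,i)}$ is defined for $(j,i)=(1,1)$ and for all $(j,i)$ with $j\ge2$.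 For such $(j,i)$ and $1\le y\le n$, $\Pi^{(j,i)}_y:=\{\pi^{(j,i)}_1,\dots,\pi^{(j,i)}_y\}$. *)

theory Defs
  imports Main
begin

text \<open>Locations are pairs (j,i) = (column, row), 1-based.
  A tableau is a function T with T j i the entry in column j, row i.
  A partition lambda = (lambda_1,...,lambda_n) is a function lam with lam i = lambda_i for 1 <= i <= n.\<close>

type_synonym loc = "nat \<times> nat"

definition is_partition :: "nat \<Rightarrow> (nat \<Rightarrow> nat) \<Rightarrow> bool" where
  "is_partition n lam \<longleftrightarrow> 1 \<le> n \<and>
     (\<forall>i j. 1 \<le> i \<and> i \<le> j \<and> j \<le> n \<longrightarrow> lam j \<le> lam i) \<and>
     lam n = 0 \<and> (\<exists>i\<in>{1..n}. lam i \<noteq> 0)"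

definition shape :: "nat \<Rightarrow> (nat \<Rightarrow> nat) \<Rightarrow> loc set" where
  "shape n lam = {(j,i). 1 \<le> i \<and> i \<le> n \<and> 1 \<le> j \<and> j \<le> lam i}"

definition collen :: "nat \<Rightarrow> (nat \<Rightarrow> nat) \<Rightarrow> nat \<Rightarrow> nat" where
  "collen n lam j = card {i\<in>{1..n}. j \<le> lam i}"

definition semistandard :: "nat \<Rightarrow> (nat \<Rightarrow> nat) \<Rightarrow> (nat \<Rightarrow> nat \<Rightarrow> nat) \<Rightarrow> bool" where
  "semistandard n lam T \<longleftrightarrow>
     (\<forall>j i. (j,i) \<in> shape n lam \<longrightarrow> T j i \<in> {1..n}) \<and>
     (\<forall>j i. (j,i) \<in> shape n lam \<and> (j+1,i) \<in> shape n lam \<longrightarrow> T j i \<le> T (j+1) i) \<and>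
     (\<forall>j i. (j,i) \<in> shape n lam \<and> (j,i+1) \<in> shape n lam \<longrightarrow> T j i < T j (i+1))"

definition col_lengths :: "nat \<Rightarrow> (nat \<Rightarrow> nat) \<Rightarrow> nat set" where
  "col_lengths n lam = collen n lam ` {1..lam 1}"

definition ndist :: "nat \<Rightarrow> (nat \<Rightarrow> nat) \<Rightarrow> nat" where
  "ndist n lam = card (col_lengths n lam)"

definition zeta :: "nat \<Rightarrow> (nat \<Rightarrow> nat) \<Rightarrow> nat \<Rightarrow> nat" where
  "zeta n lam h = sorted_list_of_set (col_lengths n lam) ! (h - 1)"

definition beta :: "nat \<Rightarrow> (nat \<Rightarrow> nat) \<Rightarrow> nat \<Rightarrow> nat" where
  "beta n lam h = Max {j\<in>{1..lam 1}. collen n lam j = zeta n lam h}"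

definition rle :: "loc \<Rightarrow> loc \<Rightarrow> bool" where
  "rle p q \<longleftrightarrow> fst p < fst q \<or> (fst p = fst q \<and> snd q \<le> snd p)"

definition rlt :: "loc \<Rightarrow> loc \<Rightarrow> bool" where
  "rlt p q \<longleftrightarrow> rle p q \<and> p \<noteq> q"

definition rmax :: "loc set \<Rightarrow> loc" where
  "rmax S = (THE q. q \<in> S \<and> (\<forall>p\<in>S. rle p q))"

text \<open>Earliest weakly increasing subsequence of a sequence of (location, value) pairs;
  returns the locations of its terms.\<close>
fun ewis_from :: "nat \<Rightarrow> ('a \<times> nat) list \<Rightarrow> 'a list" where
  "ewis_from v [] = []"
| "ewis_from v ((p,x) # xs) = (if v \<le> x then p # ewis_from x xs else ewis_from v xs)"

fun ewis :: "('a \<times> nat) list \<Rightarrow> 'a list" where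
  "ewis [] = []"
| "ewis ((p,x) # xs) = p # ewis_from x xs"

definition lowest :: "loc set \<Rightarrow> nat \<Rightarrow> nat" where
  "lowest R j = Max {i. (j,i) \<in> R}"

definition scan_seq :: "(nat \<Rightarrow> nat) \<Rightarrow> (nat \<Rightarrow> nat \<Rightarrow> nat) \<Rightarrow> nat \<Rightarrow> loc set \<Rightarrow> (loc \<times> nat) list" where
  "scan_seq lam T l R =
     map (\<lambda>j. ((j, lowest R j), T j (lowest R j))) (filter (\<lambda>j. \<exists>i. (j,i) \<in> R) [l..<lam 1 + 1])"

definition scan_path :: "(nat \<Rightarrow> nat) \<Rightarrow> (nat \<Rightarrow> nat \<Rightarrow> nat) \<Rightarrow> nat \<Rightarrow> loc set \<Rightarrow> loc list" where
  "scan_path lam T l R = ewis (scan_seq lam T l R)"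

text \<open>removed n lam T l m = union of the paths P(T;l,k) for k = c_l, ..., c_l - m + 1.\<close>
primrec removed :: "nat \<Rightarrow> (nat \<Rightarrow> nat) \<Rightarrow> (nat \<Rightarrow> nat \<Rightarrow> nat) \<Rightarrow> nat \<Rightarrow> nat \<Rightarrow> loc set" where
  "removed n lam T l 0 = {}"
| "removed n lam T l (Suc m) =
     removed n lam T l m \<union> set (scan_path lam T l (shape n lam - removed n lam T l m))"

definition P :: "nat \<Rightarrow> (nat \<Rightarrow> nat) \<Rightarrow> (nat \<Rightarrow> nat \<Rightarrow> nat) \<Rightarrow> nat \<Rightarrow> nat \<Rightarrow> loc set" where
  "P n lam T l k = set (scan_path lam T l (shape n lam - removed n lam T l (collen n lam l - k)))"

definition most_recent :: "(nat \<Rightarrow> nat \<Rightarrow> nat) \<Rightarrow> loc set \<Rightarrow> loc \<Rightarrow> nat" where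
  "most_recent T S a = (case rmax {q\<in>S. rlt q a} of (x,y) \<Rightarrow> T x y)"

text \<open>The location (j,i-1), with the convention (j,0) = (j+1,c_{j+1}).\<close>
definition prev_row_loc :: "nat \<Rightarrow> (nat \<Rightarrow> nat) \<Rightarrow> loc \<Rightarrow> loc" where
  "prev_row_loc n lam p = (if snd p = 1 then (fst p + 1, collen n lam (fst p + 1)) else (fst p, snd p - 1))"

definition U :: "nat \<Rightarrow> (nat \<Rightarrow> nat) \<Rightarrow> (nat \<Rightarrow> nat \<Rightarrow> nat) \<Rightarrow> nat \<Rightarrow> nat \<Rightarrow> nat \<Rightarrow> nat set" where
  "U n lam T l j i =
    (if l = lam 1 \<and> j = lam 1 \<and> i = 1 then (\<lambda>k. T (lam 1) k) ` {1..collen n lam (lam 1)}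
     else if (j,i) = (lam 1, 1) then (\<lambda>k. case rmax (P n lam T l k) of (x,y) \<Rightarrow> T x y) ` {1..collen n lam l}
     else (\<lambda>k. most_recent T (P n lam T l k) (prev_row_loc n lam (j,i))) ` {1..collen n lam l})"

text \<open>Greedy procedure. Permutations are functions on indices 1..n.\<close>
definition pi11 :: "nat \<Rightarrow> (nat \<Rightarrow> nat) \<Rightarrow> (nat \<Rightarrow> nat \<Rightarrow> nat) \<Rightarrow> nat \<Rightarrow> nat" where
  "pi11 n lam T = (\<lambda>i. (sorted_list_of_set (T 1 ` {1..collen n lam 1})
       @ sorted_list_of_set ({1..n} - T 1 ` {1..collen n lam 1})) ! (i - 1))"

text \<open>The indices i_1, ..., i_m of the chain starting at i_0 = idx (fuel bounds the length).\<close>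
fun gchain :: "nat \<Rightarrow> (nat \<Rightarrow> nat) \<Rightarrow> nat \<Rightarrow> nat \<Rightarrow> nat \<Rightarrow> nat \<Rightarrow> nat list" where
  "gchain 0 pi n cj t idx = []"
| "gchain (Suc f) pi n cj t idx =
     (if pi idx < t \<and> (\<exists>k. cj < k \<and> k \<le> n \<and> pi idx < pi k \<and> pi k \<le> t)
      then (let k = (LEAST k. cj < k \<and> k \<le> n \<and> pi idx < pi k \<and> pi k \<le> t)
            in k # gchain f pi n cj t k)
      else [])"

definition gstep :: "nat \<Rightarrow> (nat \<Rightarrow> nat) \<Rightarrow> (nat \<Rightarrow> nat \<Rightarrow> nat) \<Rightarrow> loc \<Rightarrow> (nat \<Rightarrow> nat) \<Rightarrow> (nat \<Rightarrow> nat)" where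
  "gstep n lam T p pi =
    (let j = fst p; i = snd p in
     if T (j - 1) i = T j i then pi
     else (let is = i # gchain n pi n (collen n lam j) (T j i) i in
           (foldl (\<lambda>rho (a,b). rho(b := pi a)) pi (zip is (tl is)))(i := pi (last is))))"

definition greedy_locs :: "nat \<Rightarrow> (nat \<Rightarrow> nat) \<Rightarrow> loc list" where
  "greedy_locs n lam = concat (map (\<lambda>j. map (\<lambda>i. (j,i)) (rev [1..<collen n lam j + 1])) [2..<lam 1 + 1])"

definition pi_at :: "nat \<Rightarrow> (nat \<Rightarrow> nat) \<Rightarrow> (nat \<Rightarrow> nat \<Rightarrow> nat) \<Rightarrow> loc \<Rightarrow> (nat \<Rightarrow> nat)" where
  "pi_at n lam T p = foldl (\<lambda>rho q. gstep n lam T q rho) (pi11 n lam T) (filter (\<lambda>q. rle q p) (greedy_locs n lam))"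

definition pi_defined :: "nat \<Rightarrow> (nat \<Rightarrow> nat) \<Rightarrow> loc \<Rightarrow> bool" where
  "pi_defined n lam p \<longleftrightarrow> p = (1,1) \<or> (2 \<le> fst p \<and> p \<in> shape n lam)"

definition Pi_set :: "(nat \<Rightarrow> nat) \<Rightarrow> nat \<Rightarrow> nat set" where
  "Pi_set pi y = pi ` {1..y}"

end

theory Submission
  imports Defs
begin

locale tab =
  fixes n :: nat and lam :: "nat \<Rightarrow> nat" and T :: "nat \<Rightarrow> nat \<Rightarrow> nat"
  assumes part: "is_partition n lam" and ss: "semistandard n lam T"
begin

abbreviation c where "c j \<equiv> collen n lam j"

lemma n1: "1 \<le> n" using part by (simp add: is_partition_def)
lemma lam_mono: "1 \<le> i \<Longrightarrow> i \<le> i' \<Longrightarrow> i' \<le> n \<Longrightarrow> lam i' \<le> lam i"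
  using part by (simp add: is_partition_def)
lemma lamn: "lam n = 0" using part by (simp add: is_partition_def)

lemma colset: "{i\<in>{1..n}. j \<le> lam i} = {1..c j}"
proof (cases "{i\<in>{1..n}. j \<le> lam i} = {}")
  case True then show ?thesis by (simp add: collen_def)
next
  case False
  let ?A = "{i\<in>{1..n}. j \<le> lam i}"
  have fin: "finite ?A" by simp
  define M where "M = Max ?A"
  have M: "M \<in> ?A" unfolding M_def using fin False by (rule Max_in)
  have "?A = {1..M}"
  proof
    show "?A \<subseteq> {1..M}"
    proof
      fix x assume "x \<in> ?A"
      have "x \<le> M" unfolding M_def using fin \<open>x \<in> ?A\<close> by (rule Max_ge)
      then show "x \<in> {1..M}" using \<open>x \<in> ?A\<close> by simp
    qed
    show "{1..M} \<subseteq> ?A"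
    proof
      fix x assume x: "x \<in> {1..M}"
      then have "lam M \<le> lam x" using M by (intro lam_mono) auto
      then show "x \<in> ?A" using x M by auto
    qed
  qed
  then show ?thesis by (simp add: collen_def)
qed

lemma c_le_n: "c j \<le> n"
proof -
  have "card {i\<in>{1..n}. j \<le> lam i} \<le> card {1..n}" by (rule card_mono) auto
  then show ?thesis by (simp add: collen_def)
qed

lemma shape_iff: "(j,i) \<in> shape n lam \<longleftrightarrow> 1 \<le> j \<and> 1 \<le> i \<and> i \<le> c j"
proof -
  have e: "i \<in> {1..c j} \<longleftrightarrow> i \<in> {i\<in>{1..n}. j \<le> lam i}" by (simp only: colset)
  have "(1 \<le> i \<and> i \<le> n \<and> j \<le> lam i) \<longleftrightarrow> (1 \<le> i \<and> i \<le> c j)" using e by simp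
  then show ?thesis unfolding shape_def by blast
qed

lemma c_anti: "j \<le> j' \<Longrightarrow> c j' \<le> c j"
proof -
  assume "j \<le> j'"
  then have "card {i\<in>{1..n}. j' \<le> lam i} \<le> card {i\<in>{1..n}. j \<le> lam i}" by (intro card_mono) auto
  then show ?thesis by (simp add: collen_def)
qed

lemma lam1_pos: "1 \<le> lam 1"
proof -
  obtain i where "i \<in> {1..n}" "lam i \<noteq> 0" using part by (auto simp: is_partition_def)
  moreover then have "lam i \<le> lam 1" by (intro lam_mono) auto
  ultimately show ?thesis by simp
qed

lemma c_pos: "1 \<le> j \<Longrightarrow> j \<le> lam 1 \<Longrightarrow> 1 \<le> c j"
proof -
  assume "1 \<le> j" "j \<le> lam 1"
  then have "1 \<in> {i\<in>{1..n}. j \<le> lam i}" using n1 by simp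
  then have "1 \<in> {1..c j}" by (simp only: colset)
  then show ?thesis by simp
qed

lemma c_zero: "lam 1 < j \<Longrightarrow> c j = 0"
proof -
  assume a: "lam 1 < j"
  have "{i\<in>{1..n}. j \<le> lam i} = {}"
  proof (rule ccontr)
    assume "{i\<in>{1..n}. j \<le> lam i} \<noteq> {}"
    then obtain i where "i \<in> {1..n}" "j \<le> lam i" by auto
    then have "lam i \<le> lam 1" by (intro lam_mono) auto
    then show False using a \<open>j \<le> lam i\<close> by linarith
  qed
  then show ?thesis by (simp add: collen_def)
qed

lemma c_lt_n: "1 \<le> j \<Longrightarrow> c j < n"
proof -
  assume j: "1 \<le> j"
  have "n \<notin> {i\<in>{1..n}. j \<le> lam i}" using lamn j by auto
  then have "n \<notin> {1..c j}" by (metis colset)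
  then have "\<not> n \<le> c j" using n1 by auto
  then show ?thesis by simp
qed

lemma T_range: "1 \<le> j \<Longrightarrow> 1 \<le> i \<Longrightarrow> i \<le> c j \<Longrightarrow> T j i \<in> {1..n}"
proof -
  assume "1 \<le> j" "1 \<le> i" "i \<le> c j"
  then have "(j,i) \<in> shape n lam" using shape_iff by blast
  then show ?thesis using ss unfolding semistandard_def by blast
qed

lemma T_col_step: "1 \<le> j \<Longrightarrow> 1 \<le> i \<Longrightarrow> i < c j \<Longrightarrow> T j i < T j (Suc i)"
proof -
  assume "1 \<le> j" "1 \<le> i" "i < c j"
  then have "(j,i) \<in> shape n lam" "(j,i+1) \<in> shape n lam" using shape_iff by auto
  then have "T j i < T j (i+1)" using ss unfolding semistandard_def by blast
  then show ?thesis by simp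
qed

lemma T_col_lt: "1 \<le> j \<Longrightarrow> 1 \<le> i \<Longrightarrow> i < i' \<Longrightarrow> i' \<le> c j \<Longrightarrow> T j i < T j i'"
proof (induction i' rule: less_induct)
  case (less i')
  show ?case
  proof (cases "i' = Suc i")
    case True then show ?thesis using T_col_step less by auto
  next
    case False
    then have "i < i' - 1" using less by auto
    then have "T j i < T j (i' - 1)" using less by auto
    also have "\<dots> < T j i'" using T_col_step[of j "i'-1"] less by auto
    finally show ?thesis .
  qed
qed

lemma T_col_le: "1 \<le> j \<Longrightarrow> 1 \<le> i \<Longrightarrow> i \<le> i' \<Longrightarrow> i' \<le> c j \<Longrightarrow> T j i \<le> T j i'"
  using T_col_lt[of j i i'] by (cases "i = i'") auto

lemma T_row: "2 \<le> j \<Longrightarrow> 1 \<le> i \<Longrightarrow> i \<le> c j \<Longrightarrow> T (j-1) i \<le> T j i"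
proof -
  assume a: "2 \<le> j" "1 \<le> i" "i \<le> c j"
  have "c j \<le> c (j-1)" using c_anti[of "j-1" j] by auto
  then have "(j-1,i) \<in> shape n lam" "(j-1+1,i) \<in> shape n lam" using a shape_iff by auto
  then have "T (j-1) i \<le> T (j-1+1) i" using ss by (auto simp: semistandard_def)
  then show ?thesis using a by simp
qed

end

lemma gchain_F: "\<not> (pi idx < t \<and> (\<exists>k. cj < k \<and> k \<le> n \<and> pi idx < pi k \<and> pi k \<le> t)) \<Longrightarrow>
  gchain (Suc f) pi n cj t idx = []"
  by (simp only: gchain.simps(2) if_False)

lemma gchain_T: "pi idx < t \<and> (\<exists>k. cj < k \<and> k \<le> n \<and> pi idx < pi k \<and> pi k \<le> t) \<Longrightarrow>
  gchain (Suc f) pi n cj t idx = (LEAST k. cj < k \<and> k \<le> n \<and> pi idx < pi k \<and> pi k \<le> t) #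
     gchain f pi n cj t (LEAST k. cj < k \<and> k \<le> n \<and> pi idx < pi k \<and> pi k \<le> t)"
  by (simp only: gchain.simps(2) if_True Let_def simp_thms)

lemma gchain_sub:
  "set (gchain f pi n cj t idx) \<subseteq> {k. cj < k \<and> k \<le> n \<and> pi k \<le> t}"
proof (induction f arbitrary: idx)
  case 0 then show ?case by simp
next
  case (Suc f)
  show ?case
  proof (cases "pi idx < t \<and> (\<exists>k. cj < k \<and> k \<le> n \<and> pi idx < pi k \<and> pi k \<le> t)")
    case True
    define k where "k = (LEAST k. cj < k \<and> k \<le> n \<and> pi idx < pi k \<and> pi k \<le> t)"
    have k: "cj < k \<and> k \<le> n \<and> pi idx < pi k \<and> pi k \<le> t"
      unfolding k_def using True by (metis (mono_tags, lifting) LeastI_ex)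
    have "gchain (Suc f) pi n cj t idx = k # gchain f pi n cj t k"
      using True unfolding k_def by (rule gchain_T)
    then show ?thesis using k Suc.IH[of k] by auto
  next
    case False then show ?thesis using gchain_F[OF False] by simp
  qed
qed

lemma gchain_sorted:
  "sorted_wrt (\<lambda>x y. pi x < pi y) (idx # gchain f pi n cj t idx)"
proof (induction f arbitrary: idx)
  case 0 then show ?case by simp
next
  case (Suc f)
  show ?case
  proof (cases "pi idx < t \<and> (\<exists>k. cj < k \<and> k \<le> n \<and> pi idx < pi k \<and> pi k \<le> t)")
    case True
    define k where "k = (LEAST k. cj < k \<and> k \<le> n \<and> pi idx < pi k \<and> pi k \<le> t)"
    have k: "cj < k \<and> k \<le> n \<and> pi idx < pi k \<and> pi k \<le> t"
      unfolding k_def using True by (metis (mono_tags, lifting) LeastI_ex)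
    have e: "gchain (Suc f) pi n cj t idx = k # gchain f pi n cj t k"
      using True unfolding k_def by (rule gchain_T)
    have IH: "sorted_wrt (\<lambda>x y. pi x < pi y) (k # gchain f pi n cj t k)" by (rule Suc.IH)
    then have "\<forall>y\<in>set (gchain f pi n cj t k). pi k < pi y" by simp
    then have "\<forall>y\<in>set (k # gchain f pi n cj t k). pi idx < pi y" using k by auto
    then show ?thesis using IH e by simp
  next
    case False then show ?thesis using gchain_F[OF False] by simp
  qed
qed

lemma gchain_least:
  "x < length (gchain f pi n cj t idx) \<Longrightarrow> cj < k \<Longrightarrow> k \<le> n \<Longrightarrow>
   pi ((idx # gchain f pi n cj t idx) ! x) < pi k \<Longrightarrow> pi k \<le> t \<Longrightarrow>
   gchain f pi n cj t idx ! x \<le> k"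
proof (induction f arbitrary: idx x)
  case 0 then show ?case by simp
next
  case (Suc f)
  show ?case
  proof (cases "pi idx < t \<and> (\<exists>k. cj < k \<and> k \<le> n \<and> pi idx < pi k \<and> pi k \<le> t)")
    case True
    define k1 where "k1 = (LEAST k. cj < k \<and> k \<le> n \<and> pi idx < pi k \<and> pi k \<le> t)"
    have e: "gchain (Suc f) pi n cj t idx = k1 # gchain f pi n cj t k1"
      using True unfolding k1_def by (rule gchain_T)
    show ?thesis
    proof (cases x)
      case 0
      then have "pi idx < pi k" using Suc.prems by simp
      then have "k1 \<le> k" unfolding k1_def using Suc.prems by (intro Least_le) auto
      then show ?thesis using e 0 by simp
    next
      case (Suc x')
      have "x' < length (gchain f pi n cj t k1)" using Suc.prems(1) e Suc by simp
      moreover have "pi ((k1 # gchain f pi n cj t k1) ! x') < pi k" using Suc.prems(4) e Suc by simp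
      ultimately have "gchain f pi n cj t k1 ! x' \<le> k" using Suc.IH Suc.prems by blast
      then show ?thesis using e Suc by simp
    qed
  next
    case False
    then have "gchain (Suc f) pi n cj t idx = []" by (rule gchain_F)
    then show ?thesis using Suc.prems(1) by simp
  qed
qed

lemma gchain_last:
  "pi idx \<le> t \<Longrightarrow> t - pi idx \<le> f \<Longrightarrow> cj < k0 \<Longrightarrow> k0 \<le> n \<Longrightarrow> pi k0 = t \<Longrightarrow>
   pi (last (idx # gchain f pi n cj t idx)) = t"
proof (induction f arbitrary: idx)
  case 0 then show ?case by simp
next
  case (Suc f)
  show ?case
  proof (cases "pi idx < t")
    case True
    then have ex: "pi idx < t \<and> (\<exists>k. cj < k \<and> k \<le> n \<and> pi idx < pi k \<and> pi k \<le> t)"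
      using Suc.prems by auto
    define k where "k = (LEAST k. cj < k \<and> k \<le> n \<and> pi idx < pi k \<and> pi k \<le> t)"
    have k: "cj < k \<and> k \<le> n \<and> pi idx < pi k \<and> pi k \<le> t"
      unfolding k_def using ex by (metis (mono_tags, lifting) LeastI_ex)
    have e: "gchain (Suc f) pi n cj t idx = k # gchain f pi n cj t k"
      using ex unfolding k_def by (rule gchain_T)
    have "pi (last (k # gchain f pi n cj t k)) = t"
      using Suc.IH[of k] k Suc.prems by auto
    then show ?thesis using e by simp
  next
    case False
    then show ?thesis using Suc.prems by simp
  qed
qed

lemma foldl_upd_out:
  "k \<notin> snd ` set ps \<Longrightarrow> foldl (\<lambda>rho (a,b). rho(b := pi a)) r0 ps k = r0 k"
  by (induction ps arbitrary: r0) auto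

lemma foldl_upd_in:
  "distinct (map snd ps) \<Longrightarrow> (a,b) \<in> set ps \<Longrightarrow> foldl (\<lambda>rho (a,b). rho(b := pi a)) r0 ps b = pi a"
proof (induction ps arbitrary: r0)
  case Nil then show ?case by simp
next
  case (Cons p ps)
  obtain a' b' where p: "p = (a',b')" by fastforce
  show ?case
  proof (cases "(a,b) = p")
    case True
    then have "b \<notin> snd ` set ps" using Cons.prems p by auto
    then have e1: "foldl (\<lambda>rho (a,b). rho(b := pi a)) (r0(b' := pi a')) ps b = (r0(b' := pi a')) b"
      by (rule foldl_upd_out)
    have e2: "foldl (\<lambda>rho (a,b). rho(b := pi a)) r0 (p # ps) =
        foldl (\<lambda>rho (a,b). rho(b := pi a)) (r0(b' := pi a')) ps" using p by simp
    have ab: "a = a'" "b = b'" using True p by auto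
    have "foldl (\<lambda>rho (a,b). rho(b := pi a)) r0 (p # ps) b = (r0(b' := pi a')) b"
      by (simp only: e2 e1)
    also have "(r0(b' := pi a')) b = pi a" using ab by simp
    finally show ?thesis .
  next
    case False
    then have "(a,b) \<in> set ps" using Cons.prems by simp
    moreover have "distinct (map snd ps)" using Cons.prems by simp
    ultimately have "foldl (\<lambda>rho (a,b). rho(b := pi a)) (r0(b' := pi a')) ps b = pi a"
      using Cons.IH by blast
    moreover have "foldl (\<lambda>rho (a,b). rho(b := pi a)) r0 (p # ps) =
        foldl (\<lambda>rho (a,b). rho(b := pi a)) (r0(b' := pi a')) ps" using p by simp
    ultimately show ?thesis by (simp only:)
  qed
qed

lemma chain_effect:
  fixes pi :: "nat \<Rightarrow> nat"
  assumes bij: "bij_betw pi {1..n} {1..n}"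
    and i1: "1 \<le> i" and icj: "i \<le> cj" and cjz: "cj \<le> z" and zn: "z \<le> n"
    and low: "\<And>r. 1 \<le> r \<Longrightarrow> r \<le> cj \<Longrightarrow> pi r \<le> t \<Longrightarrow> pi r \<le> pi i"
    and alt: "pi i < t" and tn: "t \<le> n"
    and ks_def: "ks = gchain n pi n cj t i"
    and rho_def: "rho = (foldl (\<lambda>rho (a,b). rho(b := pi a)) pi (zip (i # ks) ks))(i := pi (last (i # ks)))"
  shows "rho ` {1..z} = pi ` {1..z} - {Max {x\<in>pi ` {1..z}. x \<le> t}} \<union> {t}"
    and "\<And>r. r \<noteq> i \<Longrightarrow> r \<le> cj \<Longrightarrow> rho r = pi r"
    and "rho i = t"
proof -
  define iss where "iss = i # ks"
  define m where "m = length ks"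
  define p where "p x = iss ! x" for x
  define v where "v x = pi (p x)" for x
  define S where "S = pi ` {1..z}"
  define M where "M = Max {x\<in>S. x \<le> t}"
  have inj: "inj_on pi {1..n}" using bij by (rule bij_betw_imp_inj_on)
  have img: "pi ` {1..n} = {1..n}" using bij by (rule bij_betw_imp_surj_on)
  have t1: "1 \<le> t" using alt by simp
  obtain k0 where k0: "k0 \<in> {1..n}" "pi k0 = t" using img t1 tn by (metis atLeastAtMost_iff imageE)
  have k0c: "cj < k0"
  proof (rule ccontr)
    assume "\<not> cj < k0"
    then have "pi k0 \<le> pi i" using low[of k0] k0 by auto
    then show False using alt k0 by simp
  qed
  have sub: "set ks \<subseteq> {k. cj < k \<and> k \<le> n \<and> pi k \<le> t}" unfolding ks_def by (rule gchain_sub)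
  have sorted: "sorted_wrt (\<lambda>x y. pi x < pi y) iss" unfolding iss_def ks_def by (rule gchain_sorted)
  have least: "\<And>x k. x < m \<Longrightarrow> cj < k \<Longrightarrow> k \<le> n \<Longrightarrow> v x < pi k \<Longrightarrow> pi k \<le> t \<Longrightarrow> p (Suc x) \<le> k"
  proof -
    fix x k assume a: "x < m" "cj < k" "k \<le> n" "v x < pi k" "pi k \<le> t"
    have "ks ! x \<le> k" unfolding ks_def
      using a gchain_least[of x n pi n cj t i k] unfolding m_def v_def p_def iss_def ks_def by blast
    then show "p (Suc x) \<le> k" unfolding p_def iss_def by simp
  qed
  have lastt: "pi (last iss) = t" unfolding iss_def ks_def
    using gchain_last[of pi i t n cj k0] alt k0 k0c tn by auto
  have len: "length iss = Suc m" unfolding iss_def m_def by simp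
  have "last iss = iss ! m" unfolding iss_def m_def by (simp add: last_conv_nth)
  then have vm: "v m = t" using lastt unfolding v_def p_def by simp
  have v0: "v 0 = pi i" unfolding v_def p_def iss_def by simp
  have p0: "p 0 = i" unfolding p_def iss_def by simp
  have vmono: "\<And>x y. x < y \<Longrightarrow> y \<le> m \<Longrightarrow> v x < v y"
    using sorted len unfolding v_def p_def by (simp add: sorted_wrt_iff_nth_less)
  have vle: "\<And>x y. x \<le> y \<Longrightarrow> y \<le> m \<Longrightarrow> v x \<le> v y"
  proof -
    fix x y assume "x \<le> y" "y \<le> m"
    then show "v x \<le> v y" using vmono[of x y] by (cases "x = y") auto
  qed
  have pks: "\<And>x. x < m \<Longrightarrow> p (Suc x) = ks ! x" unfolding p_def iss_def by simp
  have pS: "\<And>x. x < m \<Longrightarrow> cj < p (Suc x) \<and> p (Suc x) \<le> n"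
    using sub pks unfolding m_def by (metis (no_types, lifting) mem_Collect_eq nth_mem subsetD)
  have p1: "\<And>x. x \<le> m \<Longrightarrow> 1 \<le> p x \<and> p x \<le> n"
  proof -
    fix x assume "x \<le> m"
    show "1 \<le> p x \<and> p x \<le> n"
    proof (cases x)
      case 0 then show ?thesis using p0 i1 icj cjz zn by simp
    next
      case (Suc x') then show ?thesis using pS[of x'] \<open>x \<le> m\<close> by simp
    qed
  qed
  have vt: "\<And>x. x \<le> m \<Longrightarrow> v x \<le> t"
  proof -
    fix x assume "x \<le> m" then show "v x \<le> t" using vle[of x m] vm by simp
  qed
  have pinj: "\<And>x y. x \<le> m \<Longrightarrow> y \<le> m \<Longrightarrow> p x = p y \<Longrightarrow> x = y"
  proof -
    fix x y assume a: "x \<le> m" "y \<le> m" "p x = p y"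
    show "x = y"
    proof (rule ccontr)
      assume "x \<noteq> y"
      then have "v x < v y \<or> v y < v x" using vmono a by (metis nat_neq_iff)
      then show False using a unfolding v_def by simp
    qed
  qed
  have setis: "set iss = p ` {..m}"
    unfolding p_def using len by (auto simp: in_set_conv_nth image_def less_Suc_eq_le)
  have dks: "distinct ks"
  proof -
    have "\<And>x y. x < m \<Longrightarrow> y < m \<Longrightarrow> ks ! x = ks ! y \<Longrightarrow> x = y"
    proof -
      fix x y assume a: "x < m" "y < m" "ks ! x = ks ! y"
      then have "p (Suc x) = p (Suc y)" using pks by simp
      then have "Suc x = Suc y" using pinj[of "Suc x" "Suc y"] a by simp
      then show "x = y" by simp
    qed
    then show ?thesis unfolding m_def distinct_conv_nth by blast
  qed
  have mz: "map snd (zip iss ks) = ks" using len unfolding m_def by (simp add: map_snd_zip_take)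
  define f where "f = foldl (\<lambda>rho (a,b). rho(b := pi a)) pi (zip iss ks)"
  have rho_f: "rho = f(i := t)" unfolding rho_def f_def using lastt iss_def by simp
  have rhoi: "rho i = t" using rho_f by simp
  have rho_ch: "\<And>x. x < m \<Longrightarrow> rho (p (Suc x)) = v x"
  proof -
    fix x assume x: "x < m"
    have ne: "p (Suc x) \<noteq> i" using pS[OF x] icj by auto
    have "(iss ! x, ks ! x) \<in> set (zip iss ks)" using x len unfolding m_def by (auto simp: set_zip)
    then have "f (ks ! x) = pi (iss ! x)" unfolding f_def
      by (intro foldl_upd_in) (simp_all add: mz dks)
    then show "rho (p (Suc x)) = v x" using ne rho_f pks[OF x] unfolding v_def p_def by simp
  qed
  have rho_out: "\<And>k. k \<notin> set iss \<Longrightarrow> rho k = pi k"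
  proof -
    fix k assume k: "k \<notin> set iss"
    then have "k \<notin> snd ` set (zip iss ks)" using mz
      by (metis iss_def list.set_intros(2) list.set_map)
    then have "f k = pi k" unfolding f_def by (rule foldl_upd_out)
    moreover have "k \<noteq> i" using k iss_def by auto
    ultimately show "rho k = pi k" using rho_f by simp
  qed
  show "rho i = t" by (rule rhoi)
  show "\<And>r. r \<noteq> i \<Longrightarrow> r \<le> cj \<Longrightarrow> rho r = pi r"
  proof -
    fix r assume r: "r \<noteq> i" "r \<le> cj"
    have "r \<notin> set iss" using r sub iss_def by auto
    then show "rho r = pi r" by (rule rho_out)
  qed
  have finS: "finite {x\<in>S. x \<le> t}" unfolding S_def by simp
  have aS: "pi i \<in> S" unfolding S_def using i1 icj cjz by auto
  have neS: "{x\<in>S. x \<le> t} \<noteq> {}" using aS alt by auto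
  have MS: "M \<in> S" "M \<le> t" using Max_in[OF finS neS] unfolding M_def by auto
  have Mge: "\<And>y. y \<in> S \<Longrightarrow> y \<le> t \<Longrightarrow> y \<le> M" unfolding M_def using finS by (simp add: Max_ge)
  have aM: "pi i \<le> M" using Mge aS alt by simp
  obtain pM where pM: "pM \<in> {1..z}" "pi pM = M" using MS unfolding S_def by auto
  have K2: "\<And>x. x < m \<Longrightarrow> v x < M \<Longrightarrow> p (Suc x) \<le> z"
  proof -
    fix x assume x: "x < m" "v x < M"
    have "cj < pM"
    proof (rule ccontr)
      assume "\<not> cj < pM"
      then have "pi pM \<le> pi i" using low[of pM] pM MS by auto
      moreover have "pi i \<le> v x" using v0 vle[of 0 x] x by simp
      ultimately show False using x pM by simp
    qed
    then have "p (Suc x) \<le> pM" using least[of x pM] x pM MS zn by auto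
    then show "p (Suc x) \<le> z" using pM by simp
  qed
  have Kf: "\<And>x. x \<le> m \<Longrightarrow> p x \<le> z \<Longrightarrow> v x \<le> M"
  proof -
    fix x assume x: "x \<le> m" "p x \<le> z"
    then have "v x \<in> S" unfolding S_def v_def using p1[OF x(1)] by auto
    then show "v x \<le> M" using Mge vt x by simp
  qed
  have Kb: "\<And>x. x \<le> m \<Longrightarrow> v x \<le> M \<Longrightarrow> p x \<le> z"
  proof -
    fix x assume x: "x \<le> m" "v x \<le> M"
    show "p x \<le> z"
    proof (cases x)
      case 0 then show ?thesis using p0 icj cjz by simp
    next
      case (Suc x')
      then have "v x' < M" using vmono[of x' x] x by simp
      then show ?thesis using K2[of x'] Suc x by simp
    qed
  qed
  have Mch: "\<exists>x\<le>m. v x = M"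
  proof (rule ccontr)
    assume ne: "\<not> (\<exists>x\<le>m. v x = M)"
    have "\<And>x. x \<le> m \<Longrightarrow> v x < M"
    proof -
      fix x assume "x \<le> m"
      then show "v x < M"
      proof (induction x)
        case 0 then show ?case using v0 aM ne by (metis le0 le_neq_implies_less)
      next
        case (Suc x)
        then have "v x < M" by simp
        then have "p (Suc x) \<le> z" using K2[of x] Suc by simp
        then have "v (Suc x) \<le> M" using Kf Suc by simp
        then show ?case using ne Suc by (metis le_neq_implies_less)
      qed
    qed
    then have "t < M" using vm by (metis le_refl)
    then show False using MS by simp
  qed
  then obtain xM where xM: "xM \<le> m" "v xM = M" by blast
  have Spi: "Pi_set pi z = S" unfolding Pi_set_def S_def by simp
  have geq: "pi ` {1..z} - {Max {x\<in>pi ` {1..z}. x \<le> t}} \<union> {t} = S - {M} \<union> {t}"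
    unfolding S_def M_def by (rule refl)
  have inS: "\<And>k. k \<in> {1..z} \<Longrightarrow> pi k \<in> S" unfolding S_def by (rule imageI)
  have "rho ` {1..z} = S - {M} \<union> {t}"
  proof
    show "rho ` {1..z} \<subseteq> S - {M} \<union> {t}"
    proof
      fix y assume "y \<in> rho ` {1..z}"
      then obtain k where k: "k \<in> {1..z}" "y = rho k" by blast
      show "y \<in> S - {M} \<union> {t}"
      proof (cases "k \<in> set iss")
        case True
        then obtain x where x: "x \<le> m" "k = p x" using setis by auto
        show ?thesis
        proof (cases x)
          case 0
          then have "y = t" using x rhoi p0 k by simp
          then show ?thesis by simp
        next
          case (Suc x')
          then have x': "x' < m" using x by simp
          have "p x \<le> z" using k x by simp
          then have "v x \<le> M" using Kf x by simp
          then have vx: "v x' < M" using vmono[of x' x] Suc x by simp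
          then have "p x' \<le> z" using Kb[of x'] x' by simp
          moreover have "1 \<le> p x'" using p1[of x'] x' by simp
          ultimately have "v x' \<in> S" unfolding v_def using inS by simp
          moreover have "y = v x'" using rho_ch[OF x'] k x Suc by simp
          ultimately show ?thesis using vx by simp
        qed
      next
        case False
        then have y: "y = pi k" using rho_out k by simp
        have "pi k \<noteq> M"
        proof
          assume "pi k = M"
          then have "pi k = pi (p xM)" using xM unfolding v_def by simp
          moreover have "k \<in> {1..n}" using k zn by simp
          moreover have "p xM \<in> {1..n}" using p1[OF xM(1)] by simp
          ultimately have "k = p xM" using inj unfolding inj_on_def by blast
          moreover have "p xM \<in> set iss" using setis xM by simp
          ultimately show False using False by simp
        qed
        moreover have "pi k \<in> S" using inS k by simp
        ultimately show ?thesis using y by simp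
      qed
    qed
    show "S - {M} \<union> {t} \<subseteq> rho ` {1..z}"
    proof
      fix y assume y: "y \<in> S - {M} \<union> {t}"
      show "y \<in> rho ` {1..z}"
      proof (cases "y = t")
        case True
        have "i \<in> {1..z}" using i1 icj cjz by simp
        then show ?thesis using rhoi True by (metis image_eqI)
      next
        case False
        then have yS: "y \<in> S" "y \<noteq> M" using y by auto
        then obtain k where k: "k \<in> {1..z}" "y = pi k" unfolding S_def by blast
        show ?thesis
        proof (cases "k \<in> set iss")
          case True
          then obtain x where x: "x \<le> m" "k = p x" using setis by auto
          have "p x \<le> z" using k x by simp
          then have "v x \<le> M" using Kf x by simp
          moreover have "v x \<noteq> M" using yS k x unfolding v_def by simp
          ultimately have vx: "v x < M" by simp
          have xm: "x < m"
          proof (rule ccontr)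
            assume "\<not> x < m"
            then have "x = m" using x by simp
            then show False using vx vm MS by simp
          qed
          have "p (Suc x) \<le> z" using K2[OF xm vx] .
          moreover have "1 \<le> p (Suc x)" using p1[of "Suc x"] xm by simp
          moreover have "rho (p (Suc x)) = y" using rho_ch[OF xm] k x unfolding v_def by simp
          ultimately show ?thesis by (metis atLeastAtMost_iff image_eqI)
        next
          case False
          then have "rho k = y" using rho_out k by simp
          then show ?thesis using k(1) by (metis image_eqI)
        qed
      qed
    qed
  qed
  then show "rho ` {1..z} = pi ` {1..z} - {Max {x\<in>pi ` {1..z}. x \<le> t}} \<union> {t}"
    using geq by simp
qed

context tab begin

definition Inv where
  "Inv pi j i \<longleftrightarrow> bij_betw pi {1..n} {1..n} \<and>
     (\<forall>r. 1 \<le> r \<and> r \<le> c j \<longrightarrow> pi r = (if i \<le> r then T j r else T (j-1) r))"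

definition Invc where
  "Invc pi j \<longleftrightarrow> bij_betw pi {1..n} {1..n} \<and> (\<forall>r. 1 \<le> r \<and> r \<le> c j \<longrightarrow> pi r = T j r)"

lemma gstep_effect:
  assumes j2: "2 \<le> j" and i1: "1 \<le> i" and ic: "i \<le> c j" and inv: "Inv pi j (Suc i)"
  shows "Inv (gstep n lam T (j,i) pi) j i"
    and "c j \<le> z \<Longrightarrow> z \<le> n \<Longrightarrow>
      Pi_set (gstep n lam T (j,i) pi) z = Pi_set pi z - {Max {x \<in> Pi_set pi z. x \<le> T j i}} \<union> {T j i}"
proof -
  have bij: "bij_betw pi {1..n} {1..n}" using inv by (simp add: Inv_def)
  have vals: "\<And>r. 1 \<le> r \<Longrightarrow> r \<le> c j \<Longrightarrow> pi r = (if Suc i \<le> r then T j r else T (j-1) r)"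
    using inv by (simp add: Inv_def)
  have pii: "pi i = T (j-1) i" using vals[of i] i1 ic by simp
  have j1: "1 \<le> j - 1" using j2 by simp
  have cjj: "c j \<le> c (j-1)" using c_anti[of "j-1" j] by simp
  have at: "T (j-1) i \<le> T j i" using T_row j2 i1 ic by simp
  have tn: "T j i \<in> {1..n}" using T_range j2 i1 ic by simp
  have low: "\<And>r. 1 \<le> r \<Longrightarrow> r \<le> c j \<Longrightarrow> pi r \<le> T j i \<Longrightarrow> pi r \<le> pi i"
  proof -
    fix r assume r: "1 \<le> r" "r \<le> c j" "pi r \<le> T j i"
    show "pi r \<le> pi i"
    proof (cases "Suc i \<le> r")
      case True
      then have "pi r = T j r" using vals r by simp
      moreover have "T j i < T j r" using T_col_lt[of j i r] True r j2 i1 by simp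
      ultimately show ?thesis using r by simp
    next
      case False
      then have "pi r = T (j-1) r" using vals r by simp
      moreover have "T (j-1) r \<le> T (j-1) i" using T_col_le[of "j-1" r i] False r j1 ic cjj by simp
      ultimately show ?thesis using pii by simp
    qed
  qed
  have "Inv (gstep n lam T (j,i) pi) j i \<and> (\<forall>z. c j \<le> z \<longrightarrow> z \<le> n \<longrightarrow>
      Pi_set (gstep n lam T (j,i) pi) z = Pi_set pi z - {Max {x \<in> Pi_set pi z. x \<le> T j i}} \<union> {T j i})"
  proof (cases "T (j-1) i = T j i")
    case True
    then have g: "gstep n lam T (j,i) pi = pi" by (simp add: gstep_def)
    have "\<forall>r. 1 \<le> r \<and> r \<le> c j \<longrightarrow> pi r = (if i \<le> r then T j r else T (j-1) r)"
    proof (intro allI impI)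
      fix r assume r: "1 \<le> r \<and> r \<le> c j"
      show "pi r = (if i \<le> r then T j r else T (j-1) r)"
      proof (cases "r = i")
        case True then show ?thesis using pii \<open>T (j-1) i = T j i\<close> by simp
      next
        case False
        then have "(Suc i \<le> r) = (i \<le> r)" by auto
        then show ?thesis using vals[of r] r by simp
      qed
    qed
    then have "Inv pi j i" using bij unfolding Inv_def by blast
    moreover have "\<forall>z. c j \<le> z \<longrightarrow> z \<le> n \<longrightarrow>
      Pi_set pi z = Pi_set pi z - {Max {x \<in> Pi_set pi z. x \<le> T j i}} \<union> {T j i}"
    proof (intro allI impI)
      fix z assume z: "c j \<le> z" "z \<le> n"
      have "i \<in> {1..z}" using i1 ic z by simp
      then have "pi i \<in> pi ` {1..z}" by (rule imageI)
      then have tS: "T j i \<in> Pi_set pi z" unfolding Pi_set_def using pii True by simp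
      have fin: "finite {x \<in> Pi_set pi z. x \<le> T j i}" unfolding Pi_set_def by simp
      have "Max {x \<in> Pi_set pi z. x \<le> T j i} = T j i"
      proof (rule Max_eqI[OF fin])
        show "\<And>y. y \<in> {x \<in> Pi_set pi z. x \<le> T j i} \<Longrightarrow> y \<le> T j i" by simp
        show "T j i \<in> {x \<in> Pi_set pi z. x \<le> T j i}" using tS by simp
      qed
      then show "Pi_set pi z = Pi_set pi z - {Max {x \<in> Pi_set pi z. x \<le> T j i}} \<union> {T j i}"
        using tS by blast
    qed
    ultimately show ?thesis using g by simp
  next
    case False
    define ks where "ks = gchain n pi n (c j) (T j i) i"
    define rho where "rho = (foldl (\<lambda>rho (a,b). rho(b := pi a)) pi (zip (i # ks) ks))(i := pi (last (i # ks)))"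
    have g: "gstep n lam T (j,i) pi = rho" using False unfolding rho_def ks_def gstep_def by (simp add: Let_def)
    have alt: "pi i < T j i" using pii at False by simp
    have ce: "\<And>z. c j \<le> z \<Longrightarrow> z \<le> n \<Longrightarrow> rho ` {1..z} = pi ` {1..z} - {Max {x\<in>pi ` {1..z}. x \<le> T j i}} \<union> {T j i}"
      using chain_effect(1)[OF bij i1 ic _ _ low alt _ ks_def rho_def] tn by simp
    have ce2: "\<And>r. r \<noteq> i \<Longrightarrow> r \<le> c j \<Longrightarrow> rho r = pi r"
    proof -
      fix r assume "r \<noteq> i" "r \<le> c j"
      moreover have "T j i \<le> n" using tn by simp
      ultimately show "rho r = pi r"
        using chain_effect(2)[OF bij i1 ic c_le_n[of j] order_refl low alt _ ks_def rho_def] by blast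
    qed
    have ce3: "rho i = T j i"
    proof -
      have "T j i \<le> n" using tn by simp
      then show ?thesis
        using chain_effect(3)[OF bij i1 ic c_le_n[of j] order_refl low alt _ ks_def rho_def] by blast
    qed
    have img: "pi ` {1..n} = {1..n}" using bij by (rule bij_betw_imp_surj_on)
    have "Max {x\<in>{1..n}. x \<le> T j i} = T j i"
      by (rule Max_eqI) (use tn in auto)
    then have rimg: "rho ` {1..n} = {1..n}" using ce[of n] c_le_n img tn by auto
    then have "card (rho ` {1..n}) = card {1..n}" by simp
    then have "inj_on rho {1..n}" by (intro eq_card_imp_inj_on) simp_all
    then have rbij: "bij_betw rho {1..n} {1..n}" using rimg by (simp add: bij_betw_def)
    have "\<forall>r. 1 \<le> r \<and> r \<le> c j \<longrightarrow> rho r = (if i \<le> r then T j r else T (j-1) r)"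
    proof (intro allI impI)
      fix r assume r: "1 \<le> r \<and> r \<le> c j"
      show "rho r = (if i \<le> r then T j r else T (j-1) r)"
      proof (cases "r = i")
        case True then show ?thesis using ce3 by simp
      next
        case False
        then have "rho r = pi r" using ce2 r by simp
        then show ?thesis using vals[of r] r False by auto
      qed
    qed
    then have "Inv rho j i" using rbij by (simp add: Inv_def)
    moreover have "\<forall>z. c j \<le> z \<longrightarrow> z \<le> n \<longrightarrow>
      Pi_set rho z = Pi_set pi z - {Max {x \<in> Pi_set pi z. x \<le> T j i}} \<union> {T j i}"
      using ce by (simp add: Pi_set_def)
    ultimately show ?thesis using g by simp
  qed
  then show "Inv (gstep n lam T (j,i) pi) j i"
    and "c j \<le> z \<Longrightarrow> z \<le> n \<Longrightarrow>
      Pi_set (gstep n lam T (j,i) pi) z = Pi_set pi z - {Max {x \<in> Pi_set pi z. x \<le> T j i}} \<union> {T j i}"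
    by auto
qed

end

lemma filter_upt_ge: "filter (\<lambda>r. i \<le> r) [a..<b] = [max a i..<b]"
  by (induction b) (auto simp: max_def)

context tab begin

definition colL where "colL j = map (\<lambda>i. (j,i)) (rev [1..<c j + 1])"
definition gs where "gs = (\<lambda>rho q. gstep n lam T q rho)"
definition colend where "colend j = foldl gs (pi11 n lam T) (concat (map colL [2..<Suc j]))"
definition rowst where "rowst j i = foldl gs (colend (j-1)) (map (\<lambda>r. (j,r)) (rev [i..<Suc (c j)]))"

lemma gl: "greedy_locs n lam = concat (map colL [2..<lam 1 + 1])"
  unfolding greedy_locs_def colL_def by simp

lemma filt:
  assumes j: "2 \<le> j" "j \<le> lam 1" and i: "1 \<le> i"
  shows "filter (\<lambda>q. rle q (j,i)) (greedy_locs n lam) =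
     concat (map colL [2..<j]) @ map (\<lambda>r. (j,r)) (rev [i..<Suc (c j)])"
proof -
  have sp: "[2..<lam 1 + 1] = [2..<j] @ j # [Suc j..<lam 1 + 1]"
    using j by (metis Suc_eq_plus1 le_SucI le_add_diff_inverse le_imp_less_Suc upt_add_eq_append upt_conv_Cons)
  have a: "filter (\<lambda>q. rle q (j,i)) (concat (map colL [2..<j])) = concat (map colL [2..<j])"
    by (rule filter_True) (auto simp: colL_def rle_def)
  have b: "filter (\<lambda>q. rle q (j,i)) (concat (map colL [Suc j..<lam 1 + 1])) = []"
    by (rule filter_False) (auto simp: colL_def rle_def)
  have "filter (\<lambda>q. rle q (j,i)) (colL j) = map (\<lambda>r. (j,r)) (filter (\<lambda>r. i \<le> r) (rev [1..<c j + 1]))"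
    unfolding colL_def filter_map by (simp add: rle_def comp_def)
  also have "\<dots> = map (\<lambda>r. (j,r)) (rev [i..<Suc (c j)])"
    using i by (simp add: rev_filter[symmetric] filter_upt_ge max_def)
  finally have c: "filter (\<lambda>q. rle q (j,i)) (colL j) = map (\<lambda>r. (j,r)) (rev [i..<Suc (c j)])" .
  show ?thesis unfolding gl sp using a b c by (simp only: map_append concat_append filter_append list.map concat.simps append_Nil2)
qed

lemma pi_at_row:
  assumes j: "2 \<le> j" "j \<le> lam 1" and i: "1 \<le> i"
  shows "pi_at n lam T (j,i) = rowst j i"
proof -
  have "[2..<Suc (j-1)] = [2..<j]" using j by simp
  then show ?thesis unfolding pi_at_def filt[OF j i] rowst_def colend_def gs_def by simp
qed

lemma pi_at11: "pi_at n lam T (1,1) = pi11 n lam T"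
proof -
  have "filter (\<lambda>q. rle q (1,1)) (greedy_locs n lam) = []"
    unfolding gl by (rule filter_False) (auto simp: colL_def rle_def)
  then show ?thesis unfolding pi_at_def by simp
qed

lemma rowst_step: "1 \<le> i \<Longrightarrow> i \<le> c j \<Longrightarrow> rowst j i = gstep n lam T (j,i) (rowst j (Suc i))"
proof -
  assume i: "1 \<le> i" "i \<le> c j"
  then have "[i..<Suc (c j)] = i # [Suc i..<Suc (c j)]" by (simp add: upt_conv_Cons)
  then show ?thesis unfolding rowst_def gs_def by simp
qed

lemma rowst_top: "rowst j (Suc (c j)) = colend (j-1)"
  unfolding rowst_def by simp

lemma colend_step: "2 \<le> j \<Longrightarrow> colend j = rowst j 1"
proof -
  assume j: "2 \<le> j"
  then have "[2..<Suc j] = [2..<j] @ [j]" by simp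
  moreover have "[2..<Suc (j-1)] = [2..<j]" using j by simp
  ultimately show ?thesis unfolding colend_def rowst_def colL_def by simp
qed

lemma colend1: "colend 1 = pi11 n lam T" unfolding colend_def by simp

lemma rowst_inv_aux:
  assumes j: "2 \<le> j" and ic: "Invc (colend (j-1)) (j-1)" and ile: "i \<le> Suc (c j)"
  shows "1 \<le> i \<longrightarrow> Inv (rowst j i) j i"
  using ile
proof (induction i rule: inc_induct)
  case base
  have "c j \<le> c (j-1)" using c_anti[of "j-1" j] by simp
  then show ?case using ic unfolding Inv_def Invc_def rowst_top by auto
next
  case (step i')
  show ?case
  proof
    assume True: "1 \<le> i'"
    have "Inv (rowst j (Suc i')) j (Suc i')" using step by simp
    then have "Inv (gstep n lam T (j,i') (rowst j (Suc i'))) j i'"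
      using gstep_effect(1)[OF j True] step by simp
    then show "Inv (rowst j i') j i'" using rowst_step[of i' j] True step by simp
  qed
qed

lemma rowst_inv:
  "2 \<le> j \<Longrightarrow> Invc (colend (j-1)) (j-1) \<Longrightarrow> 1 \<le> i \<Longrightarrow> i \<le> Suc (c j) \<Longrightarrow> Inv (rowst j i) j i"
  using rowst_inv_aux by blast

lemma L1eq: "sorted_list_of_set (T 1 ` {1..c 1}) = map (T 1) [1..<Suc (c 1)]"
proof (rule strict_sorted_equal)
  have "sorted_wrt (\<lambda>x y. T 1 x < T 1 y) [1..<Suc (c 1)]"
    by (rule sorted_wrt_mono_rel[OF _ sorted_wrt_upt]) (use T_col_lt in auto)
  then show "sorted_wrt (<) (map (T 1) [1..<Suc (c 1)])" by (simp add: sorted_wrt_map)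
  show "sorted_wrt (<) (sorted_list_of_set (T 1 ` {1..c 1}))"
    using strict_sorted_list_of_set[of "T 1 ` {1..c 1}"] by simp
  have "set (map (T 1) [1..<Suc (c 1)]) = T 1 ` {1..c 1}" by auto
  then show "set (sorted_list_of_set (T 1 ` {1..c 1})) = set (map (T 1) [1..<Suc (c 1)])" by simp
qed

lemma pi11_inv: "Invc (pi11 n lam T) 1"
proof -
  define A where "A = T 1 ` {1..c 1}"
  define L1 where "L1 = sorted_list_of_set A"
  define L2 where "L2 = sorted_list_of_set ({1..n} - A)"
  define xs where "xs = L1 @ L2"
  have p: "pi11 n lam T = (\<lambda>r. xs ! (r - 1))" unfolding pi11_def xs_def L1_def L2_def A_def by simp
  have L1: "L1 = map (T 1) [1..<Suc (c 1)]" unfolding L1_def A_def by (rule L1eq)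
  have An: "A \<subseteq> {1..n}" unfolding A_def using T_range[of 1] by auto
  have finA: "finite A" unfolding A_def by simp
  have setxs: "set xs = {1..n}" unfolding xs_def L1_def L2_def using An finA by auto
  have dxs: "distinct xs" unfolding xs_def L1_def L2_def using finA by simp
  have lxs: "length xs = n" using distinct_card[OF dxs] setxs by simp
  have vals: "\<forall>r. 1 \<le> r \<and> r \<le> c 1 \<longrightarrow> pi11 n lam T r = T 1 r"
  proof (intro allI impI)
    fix r assume r: "1 \<le> r \<and> r \<le> c 1"
    have lenL1: "length L1 = c 1" using L1 by (simp del: upt_Suc)
    have rl: "r - 1 < c 1" using r by linarith
    then have "r - 1 < length L1" using lenL1 by simp
    then have "xs ! (r - 1) = L1 ! (r - 1)" unfolding xs_def by (simp add: nth_append)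
    also have "\<dots> = T 1 ([1..<Suc (c 1)] ! (r - 1))" using L1 rl by (simp del: upt_Suc)
    also have "[1..<Suc (c 1)] ! (r - 1) = 1 + (r - 1)" using rl by (intro nth_upt) linarith
    also have "1 + (r - 1) = r" using r by linarith
    finally show "pi11 n lam T r = T 1 r" using p by simp
  qed
  have img: "pi11 n lam T ` {1..n} = {1..n}"
  proof
    show "pi11 n lam T ` {1..n} \<subseteq> {1..n}"
    proof
      fix y assume "y \<in> pi11 n lam T ` {1..n}"
      then obtain r where r: "r \<in> {1..n}" "y = xs ! (r - 1)" using p by auto
      then have "r - 1 < length xs" using lxs by auto
      then have "y \<in> set xs" using r by simp
      then show "y \<in> {1..n}" using setxs by simp
    qed
    show "{1..n} \<subseteq> pi11 n lam T ` {1..n}"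
    proof
      fix y assume "y \<in> {1..n}"
      then have "y \<in> set xs" using setxs by simp
      then obtain k where k: "k < length xs" "xs ! k = y" by (auto simp: in_set_conv_nth)
      then have "Suc k \<in> {1..n}" "pi11 n lam T (Suc k) = y" using lxs p by auto
      then show "y \<in> pi11 n lam T ` {1..n}" by (metis image_eqI)
    qed
  qed
  then have "inj_on (pi11 n lam T) {1..n}" by (intro eq_card_imp_inj_on) simp_all
  then have "bij_betw (pi11 n lam T) {1..n} {1..n}" using img by (simp add: bij_betw_def)
  then show ?thesis using vals by (simp add: Invc_def)
qed

lemma Inv_Invc: "Inv pi j 1 \<Longrightarrow> Invc pi j"
  unfolding Inv_def Invc_def by simp

lemma colend_inv: "1 \<le> j \<Longrightarrow> Invc (colend j) j"
proof (induction j)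
  case 0 then show ?case by simp
next
  case (Suc j)
  show ?case
  proof (cases "j = 0")
    case True then show ?thesis using pi11_inv colend1 by simp
  next
    case False
    then have ih: "Invc (colend (Suc j - 1)) (Suc j - 1)" using Suc by simp
    have "Inv (rowst (Suc j) 1) (Suc j) 1" using rowst_inv[OF _ ih] False by simp
    then show ?thesis using colend_step[of "Suc j"] False Inv_Invc by simp
  qed
qed

lemma colend_set: "1 \<le> j \<Longrightarrow> Pi_set (colend j) (c j) = T j ` {1..c j}"
proof -
  assume "1 \<le> j"
  then have "\<forall>r. 1 \<le> r \<and> r \<le> c j \<longrightarrow> colend j r = T j r" using colend_inv by (simp add: Invc_def)
  then show ?thesis unfolding Pi_set_def by (intro image_cong) auto
qed

lemma rowst_set:
  assumes "2 \<le> j" "1 \<le> i" "i \<le> c j" "c j \<le> z" "z \<le> n"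
  shows "Pi_set (rowst j i) z = Pi_set (rowst j (Suc i)) z - {Max {x \<in> Pi_set (rowst j (Suc i)) z. x \<le> T j i}} \<union> {T j i}"
proof -
  have "Invc (colend (j-1)) (j-1)" using colend_inv assms by simp
  then have "Inv (rowst j (Suc i)) j (Suc i)" using rowst_inv assms by simp
  then show ?thesis using gstep_effect(2) assms rowst_step by simp
qed

end

locale tabl = tab +
  fixes l :: nat
  assumes l1: "1 \<le> l" and llam: "l \<le> lam 1"
begin

abbreviation z where "z \<equiv> c l"

definition step where "step H v j = (if 1 \<le> H j \<and> v \<le> T j (H j) then T j (H j) else v)"
definition pvH where "pvH H j = foldl (step H) (T l (H l)) [Suc l..<Suc j]"
definition tkH where "tkH H j \<longleftrightarrow> j = l \<or> (l < j \<and> 1 \<le> H j \<and> pvH H (j-1) \<le> T j (H j))"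
definition pathset where "pathset H = {(j, H j) | j. l \<le> j \<and> j \<le> lam 1 \<and> tkH H j}"

primrec Hs where
  "Hs 0 = (\<lambda>j. c j)"
| "Hs (Suc m) = (\<lambda>j. if l \<le> j \<and> j \<le> lam 1 \<and> tkH (Hs m) j then Hs m j - 1 else Hs m j)"

lemma ewis_set:
  "set (ewis_from v (map (\<lambda>j. ((j, H j), T j (H j))) (filter (\<lambda>j. 1 \<le> H j) [a..<b]))) =
   {(j, H j) | j. a \<le> j \<and> j < b \<and> 1 \<le> H j \<and> foldl (step H) v [a..<j] \<le> T j (H j)}"
proof (induction "b - a" arbitrary: a v)
  case 0 then show ?case by auto
next
  case (Suc d)
  then have ab: "a < b" by simp
  have up: "[a..<b] = a # [Suc a..<b]" using ab by (simp add: upt_conv_Cons)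
  have IH: "set (ewis_from (step H v a) (map (\<lambda>j. ((j, H j), T j (H j))) (filter (\<lambda>j. 1 \<le> H j) [Suc a..<b]))) =
   {(j, H j) | j. Suc a \<le> j \<and> j < b \<and> 1 \<le> H j \<and> foldl (step H) (step H v a) [Suc a..<j] \<le> T j (H j)}"
    using Suc.hyps(1)[of "Suc a"] Suc.hyps(2) by simp
  have L: "set (ewis_from v (map (\<lambda>j. ((j, H j), T j (H j))) (filter (\<lambda>j. 1 \<le> H j) [a..<b]))) =
     (if 1 \<le> H a \<and> v \<le> T a (H a) then {(a, H a)} else {}) \<union>
     set (ewis_from (step H v a) (map (\<lambda>j. ((j, H j), T j (H j))) (filter (\<lambda>j. 1 \<le> H j) [Suc a..<b])))"
    unfolding up by (auto simp: step_def)
  have fo: "\<And>j. Suc a \<le> j \<Longrightarrow> foldl (step H) v [a..<j] = foldl (step H) (step H v a) [Suc a..<j]"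
    by (simp add: upt_conv_Cons)
  show ?case
  proof (rule set_eqI)
    fix q
    show "q \<in> set (ewis_from v (map (\<lambda>j. ((j, H j), T j (H j))) (filter (\<lambda>j. 1 \<le> H j) [a..<b]))) \<longleftrightarrow>
      q \<in> {(j, H j) | j. a \<le> j \<and> j < b \<and> 1 \<le> H j \<and> foldl (step H) v [a..<j] \<le> T j (H j)}"
      unfolding L IH
    proof
      assume "q \<in> (if 1 \<le> H a \<and> v \<le> T a (H a) then {(a, H a)} else {}) \<union>
         {(j, H j) | j. Suc a \<le> j \<and> j < b \<and> 1 \<le> H j \<and> foldl (step H) (step H v a) [Suc a..<j] \<le> T j (H j)}"
      then show "q \<in> {(j, H j) | j. a \<le> j \<and> j < b \<and> 1 \<le> H j \<and> foldl (step H) v [a..<j] \<le> T j (H j)}"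
      proof
        assume a: "q \<in> (if 1 \<le> H a \<and> v \<le> T a (H a) then {(a, H a)} else {})"
        have C: "1 \<le> H a \<and> v \<le> T a (H a)"
        proof (rule ccontr)
          assume "\<not> (1 \<le> H a \<and> v \<le> T a (H a))"
          then have "(if 1 \<le> H a \<and> v \<le> T a (H a) then {(a, H a)} else {}) = {}" by (rule if_not_P)
          then show False using a by (simp only: empty_iff)
        qed
        then have qa: "q = (a, H a)" using a by simp
        have "foldl (step H) v [a..<a] \<le> T a (H a)" using C by simp
        then show ?thesis using ab C qa by blast
      next
        assume "q \<in> {(j, H j) | j. Suc a \<le> j \<and> j < b \<and> 1 \<le> H j \<and> foldl (step H) (step H v a) [Suc a..<j] \<le> T j (H j)}"
        then obtain j where "q = (j, H j)" "Suc a \<le> j" "j < b" "1 \<le> H j" "foldl (step H) (step H v a) [Suc a..<j] \<le> T j (H j)"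
          by blast
        then have "foldl (step H) v [a..<j] \<le> T j (H j)" using fo[of j] by simp
        then show ?thesis using \<open>q = (j, H j)\<close> \<open>Suc a \<le> j\<close> \<open>j < b\<close> \<open>1 \<le> H j\<close>
          by (intro CollectI exI[of _ j]) simp
      qed
    next
      assume "q \<in> {(j, H j) | j. a \<le> j \<and> j < b \<and> 1 \<le> H j \<and> foldl (step H) v [a..<j] \<le> T j (H j)}"
      then obtain j where j: "q = (j, H j)" "a \<le> j" "j < b" "1 \<le> H j" "foldl (step H) v [a..<j] \<le> T j (H j)"
        by blast
      show "q \<in> (if 1 \<le> H a \<and> v \<le> T a (H a) then {(a, H a)} else {}) \<union>
         {(j, H j) | j. Suc a \<le> j \<and> j < b \<and> 1 \<le> H j \<and> foldl (step H) (step H v a) [Suc a..<j] \<le> T j (H j)}"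
      proof (cases "j = a")
        case True then show ?thesis using j by simp
      next
        case False
        then have "Suc a \<le> j" using j by simp
        then have "foldl (step H) (step H v a) [Suc a..<j] \<le> T j (H j)" using fo[of j] j by simp
        then show ?thesis using j \<open>Suc a \<le> j\<close> by blast
      qed
    qed
  qed
qed

lemma pvH_pre: "1 \<le> j \<Longrightarrow> foldl (step H) (T l (H l)) [Suc l..<j] = pvH H (j - 1)"
proof -
  assume "1 \<le> j"
  then have "Suc (j - 1) = j" by simp
  then show ?thesis unfolding pvH_def by (simp only:)
qed

lemma scan_char:
  assumes R: "\<And>j i. (j,i) \<in> Rs \<longleftrightarrow> 1 \<le> j \<and> 1 \<le> i \<and> i \<le> H j"
    and Hl: "1 \<le> H l"
  shows "set (scan_path lam T l Rs) = pathset H"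
proof -
  have low: "\<And>j. 1 \<le> j \<Longrightarrow> 1 \<le> H j \<Longrightarrow> lowest Rs j = H j"
  proof -
    fix j :: nat assume j: "1 \<le> j" "1 \<le> H j"
    have "{i. (j,i) \<in> Rs} = {1..H j}" using R j by auto
    moreover have "Max {1..H j} = H j" by (rule Max_eqI) (use j in auto)
    ultimately show "lowest Rs j = H j" unfolding lowest_def by simp
  qed
  have fl: "filter (\<lambda>j. \<exists>i. (j,i) \<in> Rs) [l..<lam 1 + 1] = filter (\<lambda>j. 1 \<le> H j) [l..<lam 1 + 1]"
  proof (rule filter_cong[OF refl])
    fix j assume "j \<in> set [l..<lam 1 + 1]"
    then have "l \<le> j" by (simp del: upt_Suc)
    then have "1 \<le> j" using l1 by linarith
    then show "(\<exists>i. (j,i) \<in> Rs) = (1 \<le> H j)" using R by auto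
  qed
  have seq: "scan_seq lam T l Rs = map (\<lambda>j. ((j, H j), T j (H j))) (filter (\<lambda>j. 1 \<le> H j) [l..<lam 1 + 1])"
    unfolding scan_seq_def fl
  proof (rule map_cong[OF refl])
    fix j assume "j \<in> set (filter (\<lambda>j. 1 \<le> H j) [l..<lam 1 + 1])"
    then have "l \<le> j" "1 \<le> H j" by (simp_all del: upt_Suc)
    then have "1 \<le> j" "1 \<le> H j" using l1 by linarith+
    then show "((j, lowest Rs j), T j (lowest Rs j)) = ((j, H j), T j (H j))" using low by simp
  qed
  have up: "[l..<lam 1 + 1] = l # [Suc l..<lam 1 + 1]" using llam by (simp add: upt_conv_Cons)
  have "set (scan_path lam T l Rs) = {(l, H l)} \<union>
     {(j, H j) | j. Suc l \<le> j \<and> j < lam 1 + 1 \<and> 1 \<le> H j \<and> foldl (step H) (T l (H l)) [Suc l..<j] \<le> T j (H j)}"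
  proof -
    have "filter (\<lambda>j. 1 \<le> H j) (l # [Suc l..<lam 1 + 1]) = l # filter (\<lambda>j. 1 \<le> H j) [Suc l..<lam 1 + 1]"
      using Hl by (simp del: upt_Suc)
    then have "scan_path lam T l Rs = (l, H l) # ewis_from (T l (H l)) (map (\<lambda>j. ((j, H j), T j (H j))) (filter (\<lambda>j. 1 \<le> H j) [Suc l..<lam 1 + 1]))"
      unfolding scan_path_def seq up by (simp del: upt_Suc)
    then show ?thesis using ewis_set by (simp del: upt_Suc)
  qed
  also have "\<dots> = pathset H"
  proof (rule set_eqI)
    fix q
    show "q \<in> {(l, H l)} \<union>
     {(j, H j) | j. Suc l \<le> j \<and> j < lam 1 + 1 \<and> 1 \<le> H j \<and> foldl (step H) (T l (H l)) [Suc l..<j] \<le> T j (H j)}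
      \<longleftrightarrow> q \<in> pathset H"
    proof
      assume "q \<in> {(l, H l)} \<union>
       {(j, H j) | j. Suc l \<le> j \<and> j < lam 1 + 1 \<and> 1 \<le> H j \<and> foldl (step H) (T l (H l)) [Suc l..<j] \<le> T j (H j)}"
      then show "q \<in> pathset H"
      proof
        assume "q \<in> {(l, H l)}" then show ?thesis using llam unfolding pathset_def tkH_def by auto
      next
        assume "q \<in> {(j, H j) | j. Suc l \<le> j \<and> j < lam 1 + 1 \<and> 1 \<le> H j \<and> foldl (step H) (T l (H l)) [Suc l..<j] \<le> T j (H j)}"
        then obtain j where j: "q = (j, H j)" "Suc l \<le> j" "j < lam 1 + 1" "1 \<le> H j" "foldl (step H) (T l (H l)) [Suc l..<j] \<le> T j (H j)"
          by blast
        then have "pvH H (j-1) \<le> T j (H j)" using pvH_pre[of j H] by simp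
        then show ?thesis using j unfolding pathset_def tkH_def by auto
      qed
    next
      assume "q \<in> pathset H"
      then obtain j where j: "q = (j, H j)" "l \<le> j" "j \<le> lam 1" "tkH H j" unfolding pathset_def by blast
      show "q \<in> {(l, H l)} \<union>
       {(j, H j) | j. Suc l \<le> j \<and> j < lam 1 + 1 \<and> 1 \<le> H j \<and> foldl (step H) (T l (H l)) [Suc l..<j] \<le> T j (H j)}"
      proof (cases "j = l")
        case True then show ?thesis using j by simp
      next
        case False
        then have "l < j" "1 \<le> H j" "pvH H (j-1) \<le> T j (H j)" using j unfolding tkH_def by auto
        then have "foldl (step H) (T l (H l)) [Suc l..<j] \<le> T j (H j)" using pvH_pre[of j H] by simp
        then show ?thesis using j \<open>l < j\<close> \<open>1 \<le> H j\<close> by auto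
      qed
    qed
  qed
  finally show ?thesis .
qed

end

context tabl begin

lemma pv_l: "pvH H l = T l (H l)" unfolding pvH_def by simp

lemma pv_Suc: "l \<le> j \<Longrightarrow> pvH H (Suc j) = step H (pvH H j) (Suc j)"
  unfolding pvH_def by simp

lemma tk_l: "tkH H l" unfolding tkH_def by simp

lemma tk_pos: "l < j \<Longrightarrow> tkH H j \<Longrightarrow> 1 \<le> H j" unfolding tkH_def by auto

lemma pv_tk: "l \<le> j \<Longrightarrow> tkH H j \<Longrightarrow> pvH H j = T j (H j)"
proof -
  assume a: "l \<le> j" "tkH H j"
  show ?thesis
  proof (cases "j = l")
    case True then show ?thesis using pv_l by simp
  next
    case False
    then obtain j' where j': "j = Suc j'" "l \<le> j'" using a by (cases j) auto
    then have "1 \<le> H j" "pvH H j' \<le> T j (H j)" using a False unfolding tkH_def by auto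
    then show ?thesis using pv_Suc[OF j'(2)] j'(1) by (simp add: step_def)
  qed
qed

lemma pv_ntk: "l < j \<Longrightarrow> \<not> tkH H j \<Longrightarrow> pvH H j = pvH H (j-1)"
proof -
  assume a: "l < j" "\<not> tkH H j"
  then obtain j' where j': "j = Suc j'" "l \<le> j'" by (cases j) auto
  then have nc: "\<not> (1 \<le> H j \<and> pvH H j' \<le> T j (H j))" using a unfolding tkH_def by auto
  have "step H (pvH H j') j = pvH H j'" unfolding step_def using nc by (rule if_not_P)
  then show ?thesis using pv_Suc[OF j'(2)] j'(1) by simp
qed

lemma pv_mono: "l < j \<Longrightarrow> pvH H (j-1) \<le> pvH H j"
proof -
  assume a: "l < j"
  then obtain j' where j': "j = Suc j'" "l \<le> j'" by (cases j) auto
  then show ?thesis using pv_Suc[OF j'(2)] by (simp add: step_def)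
qed

lemma pv_tk_le: "l < j \<Longrightarrow> tkH H j \<Longrightarrow> pvH H (j-1) \<le> T j (H j)"
  unfolding tkH_def by auto

lemma pv_ntk_gt: "l < j \<Longrightarrow> \<not> tkH H j \<Longrightarrow> 1 \<le> H j \<Longrightarrow> T j (H j) < pvH H (j-1)"
  unfolding tkH_def by auto

lemma Hs_Suc_le: "Hs (Suc m) j \<le> Hs m j" by simp

lemma Hs_c: "Hs m j \<le> c j"
proof (induction m)
  case 0 then show ?case by simp
next
  case (Suc m) then show ?case using Hs_Suc_le[of m j] by linarith
qed

lemma Hs_Suc_ge: "Hs m j - 1 \<le> Hs (Suc m) j" by simp

lemma Hs_anti: "m \<le> m' \<Longrightarrow> Hs m' j \<le> Hs m j"
proof (induction m' rule: dec_induct)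
  case base then show ?case by simp
next
  case (step m') then show ?case using Hs_Suc_le[of m' j] by linarith
qed

lemma tk_lam: "l \<le> j \<Longrightarrow> tkH (Hs m) j \<Longrightarrow> j \<le> lam 1"
proof -
  assume a: "l \<le> j" "tkH (Hs m) j"
  show "j \<le> lam 1"
  proof (cases "j = l")
    case True then show ?thesis using llam by simp
  next
    case False
    then have "1 \<le> Hs m j" using tk_pos a by simp
    then have "1 \<le> c j" using Hs_c[of m j] by linarith
    show ?thesis
    proof (rule ccontr)
      assume "\<not> j \<le> lam 1"
      then have "c j = 0" using c_zero by simp
      then show False using \<open>1 \<le> c j\<close> by simp
    qed
  qed
qed

lemma Hs_Suc_tk: "l \<le> j \<Longrightarrow> tkH (Hs m) j \<Longrightarrow> Hs (Suc m) j = Hs m j - 1"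
  using tk_lam by simp

lemma Hs_Suc_ntk: "\<not> tkH (Hs m) j \<Longrightarrow> Hs (Suc m) j = Hs m j"
  by simp

lemma Hs_l: "Hs m l = z - m"
proof (induction m)
  case 0 then show ?case by simp
next
  case (Suc m) then show ?case using Hs_Suc_tk[of l m] tk_l by simp
qed

lemma Hs_R: "m \<le> z \<Longrightarrow> ((j,i) \<in> shape n lam - removed n lam T l m \<longleftrightarrow> 1 \<le> j \<and> 1 \<le> i \<and> i \<le> Hs m j)"
proof (induction m arbitrary: j i)
  case 0 then show ?case using shape_iff by simp
next
  case (Suc m)
  have R: "\<And>j i. (j,i) \<in> shape n lam - removed n lam T l m \<longleftrightarrow> 1 \<le> j \<and> 1 \<le> i \<and> i \<le> Hs m j"
    using Suc by simp
  have Hl: "1 \<le> Hs m l" using Hs_l Suc.prems by simp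
  have ps: "set (scan_path lam T l (shape n lam - removed n lam T l m)) = pathset (Hs m)"
    by (rule scan_char[OF R Hl])
  have rem: "removed n lam T l (Suc m) = removed n lam T l m \<union> pathset (Hs m)"
    using ps by simp
  have inps: "(j,i) \<in> pathset (Hs m) \<longleftrightarrow> i = Hs m j \<and> l \<le> j \<and> j \<le> lam 1 \<and> tkH (Hs m) j"
    unfolding pathset_def by auto
  show ?case
  proof (cases "l \<le> j \<and> j \<le> lam 1 \<and> tkH (Hs m) j")
    case True
    then have "Hs (Suc m) j = Hs m j - 1" by simp
    then show ?thesis unfolding rem using R[of j i] inps True by auto
  next
    case False
    then have "Hs (Suc m) j = Hs m j" by auto
    then show ?thesis unfolding rem using R[of j i] inps False by auto
  qed
qed

lemma P_eq: "1 \<le> k \<Longrightarrow> k \<le> z \<Longrightarrow> P n lam T l k = pathset (Hs (z - k))"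
proof -
  assume k: "1 \<le> k" "k \<le> z"
  have R: "\<And>j i. (j,i) \<in> shape n lam - removed n lam T l (z - k) \<longleftrightarrow> 1 \<le> j \<and> 1 \<le> i \<and> i \<le> Hs (z - k) j"
    using Hs_R[of "z - k"] by simp
  have Hl: "1 \<le> Hs (z - k) l" using Hs_l k by simp
  show ?thesis unfolding P_def using scan_char[OF R Hl] by simp
qed

lemma Hs_col: "l < j \<Longrightarrow> Hs m j \<le> Hs m (j-1)"
proof (induction m)
  case 0 then show ?case using c_anti[of "j-1" j] by simp
next
  case (Suc m)
  have j2: "2 \<le> j" using Suc.prems l1 by simp
  show ?case
  proof (cases "Hs m j < Hs m (j-1)")
    case True
    then show ?thesis using Hs_Suc_le[of m j] Hs_Suc_ge[of m "j-1"] by linarith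
  next
    case False
    then have eq: "Hs m j = Hs m (j-1)" using Suc by simp
    show ?thesis
    proof (cases "tkH (Hs m) (j-1) \<and> 1 \<le> Hs m j")
      case True
      have lj: "l \<le> j - 1" using Suc.prems by simp
      have "pvH (Hs m) (j-1) = T (j-1) (Hs m (j-1))" using pv_tk lj True by simp
      also have "\<dots> \<le> T j (Hs m j)" using eq T_row[OF j2] True Hs_c[of m j] by simp
      finally have "tkH (Hs m) j" unfolding tkH_def using True Suc.prems by simp
      then have "Hs (Suc m) j = Hs m j - 1" using Hs_Suc_tk Suc.prems by simp
      moreover have "Hs (Suc m) (j-1) = Hs m (j-1) - 1" using Hs_Suc_tk lj True by simp
      ultimately show ?thesis using eq by simp
    next
      case False
      show ?thesis
      proof (cases "1 \<le> Hs m j")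
        case True
        then have "\<not> tkH (Hs m) (j-1)" using False by simp
        then have "Hs (Suc m) (j-1) = Hs m (j-1)" by simp
        then show ?thesis using eq Hs_Suc_le[of m j] by linarith
      next
        case False
        then show ?thesis using Hs_Suc_le[of m j] by simp
      qed
    qed
  qed
qed

lemma Hs_z: "l \<le> j \<Longrightarrow> Hs z j = 0"
proof (induction j rule: dec_induct)
  case base then show ?case using Hs_l by simp
next
  case (step j)
  then show ?case using Hs_col[of "Suc j" z] by simp
qed

lemma pv_strict: "l \<le> j \<Longrightarrow> m < m' \<Longrightarrow> m' < z \<Longrightarrow> pvH (Hs m') j < pvH (Hs m) j"
proof (induction j rule: dec_induct)
  case base
  assume a: "m < m'" "m' < z"
  have "pvH (Hs m') l = T l (z - m')" "pvH (Hs m) l = T l (z - m)" using pv_l Hs_l by simp_all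
  moreover have "T l (z - m') < T l (z - m)" using T_col_lt[of l "z - m'" "z - m"] a l1 by simp
  ultimately show ?case by simp
next
  case (step j)
  assume a: "m < m'" "m' < z"
  have ih: "pvH (Hs m') j < pvH (Hs m) j" using step a by simp
  have lj: "l < Suc j" using step by simp
  have j2: "1 \<le> Suc j" by simp
  show ?case
  proof (cases "tkH (Hs m') (Suc j)")
    case False
    then have "pvH (Hs m') (Suc j) = pvH (Hs m') j" using pv_ntk[OF lj] by simp
    moreover have "pvH (Hs m) j \<le> pvH (Hs m) (Suc j)" using pv_mono[OF lj] by simp
    ultimately show ?thesis using ih by simp
  next
    case tkm': True
    have pos': "1 \<le> Hs m' (Suc j)" using tk_pos[OF lj tkm'] .
    have "Suc m \<le> m'" using a by simp
    then have "Hs m' (Suc j) \<le> Hs (Suc m) (Suc j)" by (rule Hs_anti)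
    show ?thesis
    proof (cases "tkH (Hs m) (Suc j)")
      case True
      then have "Hs (Suc m) (Suc j) = Hs m (Suc j) - 1" using Hs_Suc_tk lj by simp
      then have lt: "Hs m' (Suc j) < Hs m (Suc j)"
        using \<open>Hs m' (Suc j) \<le> Hs (Suc m) (Suc j)\<close> pos' by linarith
      have "T (Suc j) (Hs m' (Suc j)) < T (Suc j) (Hs m (Suc j))"
        using T_col_lt[OF j2 pos' lt Hs_c] .
      then show ?thesis using pv_tk lj True tkm' by simp
    next
      case False
      have "m \<le> m'" using a by simp
      then have le: "Hs m' (Suc j) \<le> Hs m (Suc j)" by (rule Hs_anti)
      then have pos: "1 \<le> Hs m (Suc j)" using pos' by simp
      have "T (Suc j) (Hs m' (Suc j)) \<le> T (Suc j) (Hs m (Suc j))"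
        using T_col_le[OF j2 pos' le Hs_c] .
      also have "\<dots> < pvH (Hs m) j" using pv_ntk_gt[OF lj False pos] by simp
      also have "\<dots> = pvH (Hs m) (Suc j)" using pv_ntk[OF lj False] by simp
      finally show ?thesis using pv_tk lj tkm' by simp
    qed
  qed
qed

end

context tabl begin

definition cur where "cur m j i = (if tkH (Hs m) j \<and> i \<le> Hs m j then pvH (Hs m) j else pvH (Hs m) (j-1))"
definition W where "W j i = (\<lambda>m. cur m j i) ` {..<z}"

lemma cur1: "l \<le> j \<Longrightarrow> m < z \<Longrightarrow> cur m j 1 = pvH (Hs m) j"
proof -
  assume a: "l \<le> j" "m < z"
  show ?thesis
  proof (cases "j = l")
    case True
    then have "tkH (Hs m) j \<and> 1 \<le> Hs m j" using tk_l Hs_l a by simp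
    then show ?thesis unfolding cur_def by simp
  next
    case False
    then have lj: "l < j" using a by simp
    show ?thesis
    proof (cases "tkH (Hs m) j")
      case True
      then have "1 \<le> Hs m j" using tk_pos lj by simp
      then show ?thesis unfolding cur_def using True by simp
    next
      case False
      then show ?thesis unfolding cur_def using pv_ntk[OF lj False] by simp
    qed
  qed
qed

lemma W_top: "l < j \<Longrightarrow> W j (Suc (c j)) = W (j-1) 1"
proof -
  assume lj: "l < j"
  have "\<And>m. m \<in> {..<z} \<Longrightarrow> cur m j (Suc (c j)) = cur m (j-1) 1"
  proof -
    fix m assume "m \<in> {..<z}"
    then have m: "m < z" by simp
    have "\<not> Suc (c j) \<le> Hs m j" using Hs_c[of m j] by simp
    then have "cur m j (Suc (c j)) = pvH (Hs m) (j-1)" unfolding cur_def by simp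
    also have "\<dots> = cur m (j-1) 1" using cur1[of "j-1" m] lj m by simp
    finally show "cur m j (Suc (c j)) = cur m (j-1) 1" .
  qed
  then show ?thesis unfolding W_def by (rule image_cong[OF refl])
qed

lemma rev_img: "(\<lambda>k. N - k) ` {1..N} = {..<(N::nat)}"
proof
  show "(\<lambda>k. N - k) ` {1..N} \<subseteq> {..<N}" by auto
  show "{..<N} \<subseteq> (\<lambda>k. N - k) ` {1..N}"
  proof
    fix m assume "m \<in> {..<N}"
    then have "N - m \<in> {1..N}" "N - (N - m) = m" by auto
    then show "m \<in> (\<lambda>k. N - k) ` {1..N}" by (metis image_eqI)
  qed
qed

lemma reindex: "(\<lambda>k. F (z - k)) ` {1..z} = F ` {..<z}"
proof -
  have "(\<lambda>k. F (z - k)) ` {1..z} = F ` ((\<lambda>k. z - k) ` {1..z})" by (simp add: image_image)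
  then show ?thesis using rev_img by simp
qed

lemma W_base: "W l 1 = T l ` {1..z}"
proof -
  have "W l 1 = (\<lambda>m. T l (z - m)) ` {..<z}"
    unfolding W_def
  proof (rule image_cong[OF refl])
    fix m assume "m \<in> {..<z}"
    then have "m < z" by simp
    then show "cur m l 1 = T l (z - m)" using cur1[of l m] pv_l Hs_l by simp
  qed
  also have "\<dots> = T l ` ((\<lambda>m. z - m) ` {..<z})" by (simp add: image_image)
  also have "(\<lambda>m. z - m) ` {..<z} = {1..z}"
  proof
    show "(\<lambda>m. z - m) ` {..<z} \<subseteq> {1..z}" by auto
    show "{1..z} \<subseteq> (\<lambda>m. z - m) ` {..<z}"
    proof
      fix k assume "k \<in> {1..z}"
      then have "z - k \<in> {..<z}" "z - (z - k) = k" by auto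
      then show "k \<in> (\<lambda>m. z - m) ` {..<z}" by (metis image_eqI)
    qed
  qed
  finally show ?thesis .
qed

lemma bump:
  assumes lj: "l < j" and i1: "1 \<le> i" and ic: "i \<le> c j"
  shows "W j i = W j (Suc i) - {Max {x \<in> W j (Suc i). x \<le> T j i}} \<union> {T j i}"
proof -
  have j1: "1 \<le> j" using lj l1 by simp
  have lj1: "l \<le> j - 1" using lj by simp
  have "Hs z j = 0" using Hs_z lj by simp
  then have ex: "\<exists>m. Hs m j < i" using i1 by (intro exI[of _ z]) simp
  define q where "q = (LEAST m. Hs m j < i)"
  have hq: "Hs q j < i" unfolding q_def using ex by (rule LeastI_ex)
  have q0: "q \<noteq> 0"
  proof
    assume "q = 0"
    then have "Hs q j = c j" by simp
    then show False using hq ic by simp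
  qed
  define p where "p = q - 1"
  have qp: "q = Suc p" using q0 p_def by simp
  have hp: "i \<le> Hs p j"
  proof -
    have "p < q" using qp by simp
    then have "\<not> Hs p j < i" unfolding q_def by (rule not_less_Least)
    then show ?thesis by simp
  qed
  have hsp: "Hs (Suc p) j < i" using hq qp by simp
  have tkp: "tkH (Hs p) j"
  proof (rule ccontr)
    assume "\<not> tkH (Hs p) j"
    then have "Hs (Suc p) j = Hs p j" by (rule Hs_Suc_ntk)
    then show False using hp hsp by simp
  qed
  have hpi: "Hs p j = i" using Hs_Suc_tk[of j p] lj tkp hp hsp by simp
  have pz: "p < z"
  proof (rule ccontr)
    assume "\<not> p < z"
    then have "Hs p j \<le> Hs z j" using Hs_anti by simp
    then show False using Hs_z[of j] lj hpi i1 by simp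
  qed
  define M where "M = pvH (Hs p) (j-1)"
  have curp: "cur p j i = T j i" unfolding cur_def using tkp hpi pv_tk[of j] lj by simp
  have curp2: "cur p j (Suc i) = M" unfolding cur_def M_def using hpi by simp
  have MT: "M \<le> T j i" unfolding M_def using pv_tk_le[OF lj tkp] hpi by simp
  have small: "\<And>m. m < p \<Longrightarrow> cur m j i = cur m j (Suc i) \<and> T j i < cur m j (Suc i)"
  proof -
    fix m assume mp: "m < p"
    have "Suc m \<le> p" using mp by simp
    then have hsm: "i \<le> Hs (Suc m) j" using Hs_anti[of "Suc m" p j] hp by simp
    show "cur m j i = cur m j (Suc i) \<and> T j i < cur m j (Suc i)"
    proof (cases "tkH (Hs m) j")
      case True
      then have "Hs (Suc m) j = Hs m j - 1" using Hs_Suc_tk lj by simp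
      then have si: "Suc i \<le> Hs m j" using hsm i1 by linarith
      then have e: "cur m j i = pvH (Hs m) j" "cur m j (Suc i) = pvH (Hs m) j" unfolding cur_def using True by auto
      have "pvH (Hs m) j = T j (Hs m j)" using pv_tk lj True by simp
      moreover have "T j i < T j (Hs m j)" using T_col_lt[OF j1 i1 _ Hs_c] si by simp
      ultimately show ?thesis using e by simp
    next
      case False
      then have e: "cur m j i = pvH (Hs m) (j-1)" "cur m j (Suc i) = pvH (Hs m) (j-1)" unfolding cur_def by auto
      have le: "i \<le> Hs m j" using hsm Hs_Suc_le[of m j] by linarith
      then have pos: "1 \<le> Hs m j" using i1 by simp
      have "T j i \<le> T j (Hs m j)" using T_col_le[OF j1 i1 le Hs_c] .
      also have "\<dots> < pvH (Hs m) (j-1)" using pv_ntk_gt[OF lj False pos] .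
      finally show ?thesis using e by simp
    qed
  qed
  have big: "\<And>m. p < m \<Longrightarrow> m < z \<Longrightarrow> cur m j i = cur m j (Suc i) \<and> cur m j (Suc i) < M"
  proof -
    fix m assume mp: "p < m" "m < z"
    have "Suc p \<le> m" using mp by simp
    then have "Hs m j \<le> Hs (Suc p) j" by (rule Hs_anti)
    then have "Hs m j < i" using hsp by simp
    then have e: "cur m j i = pvH (Hs m) (j-1)" "cur m j (Suc i) = pvH (Hs m) (j-1)" unfolding cur_def by auto
    have "pvH (Hs m) (j-1) < M" unfolding M_def using pv_strict[OF lj1 mp(1) mp(2)] .
    then show "cur m j i = cur m j (Suc i) \<and> cur m j (Suc i) < M" using e by simp
  qed
  have fin: "finite {x \<in> W j (Suc i). x \<le> T j i}" unfolding W_def by simp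
  have MW: "M \<in> W j (Suc i)" unfolding W_def using pz curp2 by (metis image_eqI lessThan_iff)
  have Mmax: "Max {x \<in> W j (Suc i). x \<le> T j i} = M"
  proof (rule Max_eqI[OF fin])
    show "M \<in> {x \<in> W j (Suc i). x \<le> T j i}" using MW MT by simp
    fix y assume "y \<in> {x \<in> W j (Suc i). x \<le> T j i}"
    then obtain m where m: "m < z" "y = cur m j (Suc i)" "y \<le> T j i" unfolding W_def by auto
    show "y \<le> M"
    proof (cases "m < p")
      case True then show ?thesis using small[OF True] m by simp
    next
      case False
      show ?thesis
      proof (cases "m = p")
        case True then show ?thesis using m curp2 by simp
      next
        case False
        then have "p < m" using \<open>\<not> m < p\<close> by simp
        then show ?thesis using big m by fastforce
      qed
    qed
  qed
  have same: "\<And>m. m < z \<Longrightarrow> m \<noteq> p \<Longrightarrow> cur m j i = cur m j (Suc i) \<and> cur m j (Suc i) \<noteq> M"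
  proof -
    fix m assume m: "m < z" "m \<noteq> p"
    show "cur m j i = cur m j (Suc i) \<and> cur m j (Suc i) \<noteq> M"
    proof (cases "m < p")
      case True then show ?thesis using small[OF True] MT by fastforce
    next
      case False
      then have "p < m" using m by simp
      then show ?thesis using big m by fastforce
    qed
  qed
  have "W j i = W j (Suc i) - {M} \<union> {T j i}"
  proof
    show "W j i \<subseteq> W j (Suc i) - {M} \<union> {T j i}"
    proof
      fix y assume "y \<in> W j i"
      then obtain m where m: "m < z" "y = cur m j i" unfolding W_def by auto
      show "y \<in> W j (Suc i) - {M} \<union> {T j i}"
      proof (cases "m = p")
        case True then show ?thesis using m curp by simp
      next
        case False
        then have "y = cur m j (Suc i)" "y \<noteq> M" using same m by auto
        moreover have "cur m j (Suc i) \<in> W j (Suc i)" unfolding W_def using m by simp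
        ultimately show ?thesis by simp
      qed
    qed
    show "W j (Suc i) - {M} \<union> {T j i} \<subseteq> W j i"
    proof
      fix y assume y: "y \<in> W j (Suc i) - {M} \<union> {T j i}"
      show "y \<in> W j i"
      proof (cases "y = T j i")
        case True then show ?thesis unfolding W_def using curp pz by (metis image_eqI lessThan_iff)
      next
        case False
        then have "y \<in> W j (Suc i)" "y \<noteq> M" using y by auto
        then obtain m where m: "m < z" "y = cur m j (Suc i)" unfolding W_def by auto
        then have "m \<noteq> p" using \<open>y \<noteq> M\<close> curp2 by auto
        then have "y = cur m j i" using same m by simp
        then show ?thesis unfolding W_def using m by simp
      qed
    qed
  qed
  then show ?thesis using Mmax by simp
qed

end

lemma rle_antisym: "rle p q \<Longrightarrow> rle q p \<Longrightarrow> p = q"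
  unfolding rle_def by (cases p, cases q) auto

lemma rle_refl: "rle p p" unfolding rle_def by simp

lemma rmax_eq: "q \<in> S \<Longrightarrow> (\<forall>p\<in>S. rle p q) \<Longrightarrow> rmax S = q"
  unfolding rmax_def
proof (rule the_equality)
  assume "q \<in> S" "\<forall>p\<in>S. rle p q"
  then show "q \<in> S \<and> (\<forall>p\<in>S. rle p q)" by simp
  fix q' assume a: "q' \<in> S \<and> (\<forall>p\<in>S. rle p q')"
  then show "q' = q" using \<open>q \<in> S\<close> \<open>\<forall>p\<in>S. rle p q\<close> rle_antisym by blast
qed

context tabl begin

lemma ps_mem: "q \<in> pathset (Hs m) \<longleftrightarrow> (\<exists>j. q = (j, Hs m j) \<and> l \<le> j \<and> j \<le> lam 1 \<and> tkH (Hs m) j)"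
  unfolding pathset_def by blast

lemma ps_snd: "q \<in> pathset (Hs m) \<Longrightarrow> m < z \<Longrightarrow> 1 \<le> snd q \<and> snd q \<le> c (fst q) \<and> l \<le> fst q"
proof -
  assume a: "q \<in> pathset (Hs m)" "m < z"
  then obtain j where j: "q = (j, Hs m j)" "l \<le> j" "j \<le> lam 1" "tkH (Hs m) j" using ps_mem by blast
  have "1 \<le> Hs m j"
  proof (cases "j = l")
    case True then show ?thesis using Hs_l a by simp
  next
    case False then show ?thesis using tk_pos j by simp
  qed
  then show ?thesis using j Hs_c by simp
qed

lemma Lrm: "l \<le> j' \<Longrightarrow> m < z \<Longrightarrow>
  \<exists>q \<in> {q \<in> pathset (Hs m). fst q \<le> j'}. (\<forall>p \<in> {q \<in> pathset (Hs m). fst q \<le> j'}. rle p q) \<and>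
     T (fst q) (snd q) = pvH (Hs m) j'"
proof (induction j' rule: dec_induct)
  case base
  have qin: "(l, Hs m l) \<in> pathset (Hs m)" using ps_mem tk_l llam by blast
  have all: "\<forall>p \<in> {q \<in> pathset (Hs m). fst q \<le> l}. rle p (l, Hs m l)"
  proof
    fix p assume "p \<in> {q \<in> pathset (Hs m). fst q \<le> l}"
    then obtain j where "p = (j, Hs m j)" "l \<le> j" "fst p \<le> l" using ps_mem by auto
    then have "p = (l, Hs m l)" by simp
    then show "rle p (l, Hs m l)" using rle_refl by simp
  qed
  show ?case using qin all pv_l by (intro bexI[of _ "(l, Hs m l)"]) auto
next
  case (step j')
  have lj: "l < Suc j'" using step by simp
  show ?case
  proof (cases "tkH (Hs m) (Suc j')")
    case True
    have qin: "(Suc j', Hs m (Suc j')) \<in> pathset (Hs m)" using ps_mem True tk_lam lj by fastforce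
    have all: "\<forall>p \<in> {q \<in> pathset (Hs m). fst q \<le> Suc j'}. rle p (Suc j', Hs m (Suc j'))"
    proof
      fix p assume p: "p \<in> {q \<in> pathset (Hs m). fst q \<le> Suc j'}"
      then obtain j where j: "p = (j, Hs m j)" "fst p \<le> Suc j'" using ps_mem by auto
      show "rle p (Suc j', Hs m (Suc j'))"
      proof (cases "j = Suc j'")
        case True then show ?thesis using j rle_refl by simp
      next
        case False then show ?thesis using j unfolding rle_def by simp
      qed
    qed
    show ?thesis using qin all pv_tk[of "Suc j'"] lj True by (intro bexI[of _ "(Suc j', Hs m (Suc j'))"]) auto
  next
    case False
    have eqs: "{q \<in> pathset (Hs m). fst q \<le> Suc j'} = {q \<in> pathset (Hs m). fst q \<le> j'}"
    proof
      show "{q \<in> pathset (Hs m). fst q \<le> Suc j'} \<subseteq> {q \<in> pathset (Hs m). fst q \<le> j'}"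
      proof
        fix q assume q: "q \<in> {q \<in> pathset (Hs m). fst q \<le> Suc j'}"
        then obtain j where j: "q = (j, Hs m j)" "tkH (Hs m) j" "fst q \<le> Suc j'" using ps_mem by auto
        then have "j \<noteq> Suc j'" using False by auto
        then show "q \<in> {q \<in> pathset (Hs m). fst q \<le> j'}" using q j by auto
      qed
      show "{q \<in> pathset (Hs m). fst q \<le> j'} \<subseteq> {q \<in> pathset (Hs m). fst q \<le> Suc j'}" by auto
    qed
    have "pvH (Hs m) (Suc j') = pvH (Hs m) j'" using pv_ntk[OF lj False] by simp
    then show ?thesis using step eqs by simp
  qed
qed

lemma rmax_val: "l \<le> j' \<Longrightarrow> m < z \<Longrightarrow>
  (case rmax {q \<in> pathset (Hs m). fst q \<le> j'} of (x,y) \<Rightarrow> T x y) = pvH (Hs m) j'"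
proof -
  assume a: "l \<le> j'" "m < z"
  obtain q where q: "q \<in> {q \<in> pathset (Hs m). fst q \<le> j'}"
    "\<forall>p \<in> {q \<in> pathset (Hs m). fst q \<le> j'}. rle p q" "T (fst q) (snd q) = pvH (Hs m) j'"
    using Lrm[OF a] by blast
  then have "rmax {q \<in> pathset (Hs m). fst q \<le> j'} = q" by (intro rmax_eq)
  then show ?thesis using q(3) by (cases q) simp
qed

lemma mr_val:
  assumes lj: "l \<le> j" and i1: "1 \<le> i" and jl: "j = l \<Longrightarrow> i = 1" and m: "m < z"
  shows "(case rmax {q \<in> pathset (Hs m). fst q < j \<or> (fst q = j \<and> i \<le> snd q)} of (x,y) \<Rightarrow> T x y) = cur m j i"
proof (cases "tkH (Hs m) j \<and> i \<le> Hs m j")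
  case True
  let ?S = "{q \<in> pathset (Hs m). fst q < j \<or> (fst q = j \<and> i \<le> snd q)}"
  have qin: "(j, Hs m j) \<in> ?S" using ps_mem True tk_lam lj by fastforce
  have all: "\<forall>p\<in>?S. rle p (j, Hs m j)"
  proof
    fix p assume p: "p \<in> ?S"
    then obtain j' where j': "p = (j', Hs m j')" "fst p < j \<or> (fst p = j \<and> i \<le> snd p)" using ps_mem by auto
    show "rle p (j, Hs m j)"
    proof (cases "j' = j")
      case True then show ?thesis using j' rle_refl by simp
    next
      case False then show ?thesis using j' unfolding rle_def by auto
    qed
  qed
  have "rmax ?S = (j, Hs m j)" using qin all by (rule rmax_eq)
  then show ?thesis unfolding cur_def using True pv_tk lj by simp
next
  case False
  have lj': "l < j"
  proof (rule ccontr)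
    assume "\<not> l < j"
    then have "j = l" using lj by simp
    then have "tkH (Hs m) j \<and> i \<le> Hs m j" using jl tk_l Hs_l m by simp
    then show False using False by simp
  qed
  have eqs: "{q \<in> pathset (Hs m). fst q < j \<or> (fst q = j \<and> i \<le> snd q)} = {q \<in> pathset (Hs m). fst q \<le> j - 1}"
  proof
    show "{q \<in> pathset (Hs m). fst q < j \<or> (fst q = j \<and> i \<le> snd q)} \<subseteq> {q \<in> pathset (Hs m). fst q \<le> j - 1}"
    proof
      fix q assume q: "q \<in> {q \<in> pathset (Hs m). fst q < j \<or> (fst q = j \<and> i \<le> snd q)}"
      then obtain j' where j': "q = (j', Hs m j')" "tkH (Hs m) j'" using ps_mem by auto
      have "\<not> (fst q = j \<and> i \<le> snd q)" using False j' by auto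
      then have "fst q < j" using q by auto
      then show "q \<in> {q \<in> pathset (Hs m). fst q \<le> j - 1}" using q by auto
    qed
    show "{q \<in> pathset (Hs m). fst q \<le> j - 1} \<subseteq> {q \<in> pathset (Hs m). fst q < j \<or> (fst q = j \<and> i \<le> snd q)}"
      using lj' by auto
  qed
  have "cur m j i = pvH (Hs m) (j-1)" unfolding cur_def using False by (rule if_not_P)
  then show ?thesis unfolding eqs using rmax_val[of "j-1" m] lj' m by simp
qed

lemma rlt_set:
  assumes q: "q \<in> pathset (Hs m)" and m: "m < z" and i1: "1 \<le> i"
  shows "rlt q (prev_row_loc n lam (j,i)) \<longleftrightarrow> fst q < j \<or> (fst q = j \<and> i \<le> snd q)"
proof -
  have qs: "1 \<le> snd q" "snd q \<le> c (fst q)" using ps_snd[OF q m] by auto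
  show ?thesis
  proof (cases "i = 1")
    case True
    then have pr: "prev_row_loc n lam (j,i) = (j+1, c (j+1))" unfolding prev_row_loc_def by simp
    have "rlt q (j+1, c (j+1)) \<longleftrightarrow> fst q < j + 1"
    proof
      assume "rlt q (j+1, c (j+1))"
      then have "rle q (j+1, c (j+1))" "q \<noteq> (j+1, c (j+1))" unfolding rlt_def by auto
      then show "fst q < j + 1" using qs unfolding rle_def by (cases q) auto
    next
      assume "fst q < j + 1"
      then show "rlt q (j+1, c (j+1))" unfolding rlt_def rle_def by auto
    qed
    then show ?thesis using pr True qs by auto
  next
    case False
    then have pr: "prev_row_loc n lam (j,i) = (j, i - 1)" unfolding prev_row_loc_def by simp
    show ?thesis unfolding pr rlt_def rle_def using False i1 by (cases q) auto
  qed
qed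

lemma U_eq:
  assumes lj: "l \<le> j" and jlam: "j \<le> lam 1" and i1: "1 \<le> i" and jl: "j = l \<Longrightarrow> i = 1"
  shows "U n lam T l j i = W j i"
proof (cases "l = lam 1 \<and> j = lam 1 \<and> i = 1")
  case True
  then have "U n lam T l j i = T l ` {1..z}" unfolding U_def by simp
  then show ?thesis using W_base True by simp
next
  case nB1: False
  show ?thesis
  proof (cases "(j,i) = (lam 1, 1)")
    case True
    then have jj: "j = lam 1" "i = 1" by auto
    then have lj': "l < j" using nB1 lj by auto
    have "U n lam T l j i = (\<lambda>k. case rmax (P n lam T l k) of (x,y) \<Rightarrow> T x y) ` {1..z}"
      unfolding U_def using nB1 True by simp
    also have "\<dots> = (\<lambda>k. cur (z - k) j 1) ` {1..z}"
    proof (rule image_cong[OF refl])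
      fix k assume k: "k \<in> {1..z}"
      have m: "z - k < z" using k by auto
      have "P n lam T l k = pathset (Hs (z - k))" using P_eq k by simp
      also have "\<dots> = {q \<in> pathset (Hs (z - k)). fst q \<le> lam 1}" using ps_mem by auto
      finally have "(case rmax (P n lam T l k) of (x,y) \<Rightarrow> T x y) = pvH (Hs (z - k)) (lam 1)"
        using rmax_val[of "lam 1" "z - k"] llam m by simp
      then show "(case rmax (P n lam T l k) of (x,y) \<Rightarrow> T x y) = cur (z - k) j 1"
        using cur1[of j "z - k"] jj lj m by simp
    qed
    also have "\<dots> = W j i" unfolding W_def using reindex[of "\<lambda>m. cur m j 1"] jj by simp
    finally show ?thesis .
  next
    case False
    have "U n lam T l j i = (\<lambda>k. most_recent T (P n lam T l k) (prev_row_loc n lam (j,i))) ` {1..z}"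
      unfolding U_def using nB1 False by auto
    also have "\<dots> = (\<lambda>k. cur (z - k) j i) ` {1..z}"
    proof (rule image_cong[OF refl])
      fix k assume k: "k \<in> {1..z}"
      have m: "z - k < z" using k by auto
      have "{q \<in> P n lam T l k. rlt q (prev_row_loc n lam (j,i))} =
          {q \<in> pathset (Hs (z - k)). fst q < j \<or> (fst q = j \<and> i \<le> snd q)}"
        using P_eq[of k] k rlt_set[OF _ m i1] by auto
      then show "most_recent T (P n lam T l k) (prev_row_loc n lam (j,i)) = cur (z - k) j i"
        unfolding most_recent_def using mr_val[OF lj i1 jl m] by simp
    qed
    also have "\<dots> = W j i" unfolding W_def using reindex[of "\<lambda>m. cur m j i"] by simp
    finally show ?thesis .
  qed
qed

end

context tabl begin

lemma col_inner:
  assumes lj: "l < j" and top: "Pi_set (rowst j (Suc (c j))) z = W j (Suc (c j))"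
    and ile: "i \<le> Suc (c j)"
  shows "1 \<le> i \<longrightarrow> Pi_set (rowst j i) z = W j i"
  using ile
proof (induction i rule: inc_induct)
  case base then show ?case using top by simp
next
  case (step i')
  show ?case
  proof
    assume i1: "1 \<le> i'"
    have ic: "i' \<le> c j" using step by simp
    have j2: "2 \<le> j" using lj l1 by simp
    have cz: "c j \<le> z" using c_anti[of l j] lj by simp
    have ih: "Pi_set (rowst j (Suc i')) z = W j (Suc i')" using step by simp
    have "Pi_set (rowst j i') z = Pi_set (rowst j (Suc i')) z - {Max {x \<in> Pi_set (rowst j (Suc i')) z. x \<le> T j i'}} \<union> {T j i'}"
      using rowst_set[OF j2 i1 ic cz c_le_n] .
    also have "\<dots> = W j i'" unfolding ih using bump[OF lj i1 ic] by simp
    finally show "Pi_set (rowst j i') z = W j i'" .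
  qed
qed

lemma main_col: "Suc l \<le> j \<Longrightarrow> j \<le> lam 1 \<longrightarrow> (\<forall>i. 1 \<le> i \<and> i \<le> Suc (c j) \<longrightarrow> Pi_set (rowst j i) z = W j i)"
proof (induction j rule: dec_induct)
  case base
  show ?case
  proof (intro impI allI)
    fix i assume a: "Suc l \<le> lam 1" "1 \<le> i \<and> i \<le> Suc (c (Suc l))"
    have "Pi_set (rowst (Suc l) (Suc (c (Suc l)))) z = Pi_set (colend l) z" using rowst_top by simp
    also have "\<dots> = T l ` {1..z}" using colend_set l1 by simp
    also have "\<dots> = W (Suc l) (Suc (c (Suc l)))" using W_base W_top[of "Suc l"] by simp
    finally show "Pi_set (rowst (Suc l) i) z = W (Suc l) i" using col_inner[of "Suc l" i] a by simp
  qed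
next
  case (step j)
  show ?case
  proof (intro impI allI)
    fix i assume a: "Suc j \<le> lam 1" "1 \<le> i \<and> i \<le> Suc (c (Suc j))"
    have lj: "l < j" using step by simp
    have j2: "2 \<le> j" using lj l1 by simp
    have "Pi_set (rowst (Suc j) (Suc (c (Suc j)))) z = Pi_set (colend j) z" using rowst_top by simp
    also have "\<dots> = Pi_set (rowst j 1) z" using colend_step[OF j2] by simp
    also have "\<dots> = W j 1" using step a by simp
    also have "\<dots> = W (Suc j) (Suc (c (Suc j)))" using W_top[of "Suc j"] lj by simp
    finally show "Pi_set (rowst (Suc j) i) z = W (Suc j) i" using col_inner[of "Suc j" i] a lj by simp
  qed
qed

lemma final:
  assumes r: "rle (l,1) (j,i)" and pd: "pi_defined n lam (j,i)"
  shows "Pi_set (pi_at n lam T (j,i)) z = U n lam T l j i"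
proof (cases "j = l")
  case True
  then have i: "i = 1"
  proof -
    have "i \<le> 1" using r True unfolding rle_def by simp
    moreover have "1 \<le> i" using pd unfolding pi_defined_def using shape_iff by auto
    ultimately show ?thesis by simp
  qed
  have pc: "pi_at n lam T (j,i) = colend l"
  proof (cases "j = 1")
    case True
    then show ?thesis using i pi_at11 colend1 \<open>j = l\<close> by simp
  next
    case False
    then have "2 \<le> j" using True l1 by simp
    then show ?thesis using pi_at_row[of j i] i True llam colend_step by simp
  qed
  have "Pi_set (colend l) z = T l ` {1..z}" using colend_set l1 by simp
  also have "\<dots> = W l 1" using W_base by simp
  also have "\<dots> = U n lam T l l 1" using U_eq[of l 1] llam by simp
  finally show ?thesis using pc True i by simp
next
  case False
  then have lj: "l < j" using r unfolding rle_def by simp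
  then have "(j,i) \<noteq> (1,1)" using l1 by auto
  then have j2: "2 \<le> j" and sh: "(j,i) \<in> shape n lam" using pd unfolding pi_defined_def by auto
  then have i: "1 \<le> i" "i \<le> c j" using shape_iff by auto
  have jlam: "j \<le> lam 1"
  proof (rule ccontr)
    assume "\<not> j \<le> lam 1"
    then have "c j = 0" using c_zero by simp
    then show False using i by simp
  qed
  have "pi_at n lam T (j,i) = rowst j i" using pi_at_row[OF j2 jlam i(1)] .
  moreover have "Pi_set (rowst j i) z = W j i" using main_col[of j] lj jlam i by simp
  moreover have "U n lam T l j i = W j i" using U_eq[of j i] lj jlam i by simp
  ultimately show ?thesis by simp
qed

end

theorem proposition5p1:
  fixes n :: nat and lam :: "nat \<Rightarrow> nat" and T :: "nat \<Rightarrow> nat \<Rightarrow> nat" and h j i :: nat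
  assumes "is_partition n lam"
    and "semistandard n lam T"
    and "1 \<le> h" and "h \<le> ndist n lam"
    and "rle (beta n lam h, 1) (j, i)"
    and "pi_defined n lam (j, i)"
  shows "Pi_set (pi_at n lam T (j, i)) (zeta n lam h) = U n lam T (beta n lam h) j i"
proof -
  interpret tab n lam T using assms(1,2) by unfold_locales
  define CL where "CL = col_lengths n lam"
  have finCL: "finite CL" unfolding CL_def col_lengths_def by simp
  have "h - 1 < length (sorted_list_of_set CL)"
    using assms(3,4) finCL unfolding ndist_def CL_def by simp
  then have "sorted_list_of_set CL ! (h - 1) \<in> set (sorted_list_of_set CL)" by (rule nth_mem)
  then have "zeta n lam h \<in> CL" unfolding zeta_def CL_def using finCL CL_def by simp
  then obtain j0 where j0: "j0 \<in> {1..lam 1}" "collen n lam j0 = zeta n lam h"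
    unfolding CL_def col_lengths_def by auto
  define B where "B = {j\<in>{1..lam 1}. collen n lam j = zeta n lam h}"
  have finB: "finite B" unfolding B_def by simp
  have neB: "B \<noteq> {}" using j0 unfolding B_def by auto
  have "beta n lam h \<in> B" unfolding beta_def B_def[symmetric] using finB neB by (rule Max_in)
  then have bB: "1 \<le> beta n lam h" "beta n lam h \<le> lam 1" "collen n lam (beta n lam h) = zeta n lam h"
    unfolding B_def by auto
  interpret tabl n lam T "beta n lam h" using bB(1,2) by unfold_locales
  show ?thesis using final[OF assms(5,6)] bB(3) by simp
qed

end
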